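(* Let $A$ and $B$ be nontrivial commutative groups. (a) If $A$ is infinite, then $\operatorname{fdeg}(\delta_{0,b})=\infty$ for every $b\in B\setminus\{0\}$; in particular $\delta(A,B)=\infty$. (b) If there is no prime $p$ such that $A$ is a finite $p$-group and $B$ is a $p$-group, then there is $b\in B$ with $\operatorname{fdeg}(\delta_{0,b})=\infty$; in particular $\delta(A,B)=\infty$. (c) If for some prime $p$, $A$ is a finite $p$-group, say $A\cong\bigoplus_{i=1}^r \mathbb{Z}/p^{\alpha_i}\mathbb{Z}$ with $\alpha_1\ge\alpha_2\ge\dots\ge\alpha_r\ge 1$, and $B$ is a $p$-group of finite exponent $p^\beta$, then $$\delta(A,B)=\sum_{j=1}^r (p^{\alpha_j}-1)+(\beta-1)(p-1)p^{\alpha_1-1}.$$ (d) If for some prime $p$, $A$ is a finite $p$-group and $B$ is a $p$-group of infinite exponent, then every $f\in B^A$ has finite functional degree, but $\delta(A,B)=\infty$.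
   Context: For commutative groups $A,B$, $B^A$ denotes the commutative group (under pointwise addition) of all maps $A\to B$. For $a\in A$, the difference operator $\Delta_a:B^A\to B^A$ is $(\Delta_a f)(x)=f(x+a)-f(x)$. Let $\widetilde{\mathbb N}=\mathbb N\cup\{-\infty,\infty\}$ ($\mathbb N=\{0,1,2,\dots\}$), totally ordered with $-\infty$ least and $\infty$ greatest. The functional degree $\operatorname{fdeg}(f)\in\widetilde{\mathbb N}$ of $f\in B^A$ is: $-\infty$ if $f=0$; otherwise the least $n\in\mathbb N$ such that $\Delta_{a_1}\cdots\Delta_{a_{n+1}}f=0$ for all $a_1,\dots,a_{n+1}\in A$; and $\infty$ if no such $n$ exists. Define $\delta(A,B)=\sup\{\operatorname{fdeg}(f): f\in B^A\}$. For $a\in A$, $b\in B$, the delta function $\delta_{a,b}\in B^A$ is given by $\delta_{a,b}(a)=b$ and $\delta_{a,b}(x)=0$ for $x\ne a$. A $p$-group is a commutative group in which every element has order a power of $p$. *)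

theory Defs
  imports "HOL-Algebra.Elementary_Groups" "HOL-Algebra.Product_Groups"
          "HOL-Library.Extended_Real" "HOL-Computational_Algebra.Primes"
begin

definition nsmul :: "nat \<Rightarrow> 'a::ab_group_add \<Rightarrow> 'a" where
  "nsmul n x = (\<Sum>i<n. x)"

text \<open>Order of an element (0 if the element has infinite order).\<close>
definition elem_order :: "'a::ab_group_add \<Rightarrow> nat" where
  "elem_order x = (if \<exists>n>0. nsmul n x = 0 then (LEAST n. n > 0 \<and> nsmul n x = 0) else 0)"

definition is_p_group :: "nat \<Rightarrow> 'a::ab_group_add itself \<Rightarrow> bool" where
  "is_p_group p T \<longleftrightarrow> (\<forall>x::'a. \<exists>k. elem_order x = p ^ k)"

definition has_exponent :: "'a::ab_group_add itself \<Rightarrow> nat \<Rightarrow> bool" where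
  "has_exponent T n \<longleftrightarrow> n > 0 \<and> (\<forall>x::'a. nsmul n x = 0) \<and>
     (\<forall>m>0. (\<forall>x::'a. nsmul m x = 0) \<longrightarrow> n \<le> m)"

definition infinite_exponent :: "'a::ab_group_add itself \<Rightarrow> bool" where
  "infinite_exponent T \<longleftrightarrow> \<not> (\<exists>n>0. \<forall>x::'a. nsmul n x = 0)"

definition Delta :: "'a::ab_group_add \<Rightarrow> ('a \<Rightarrow> 'b::ab_group_add) \<Rightarrow> ('a \<Rightarrow> 'b)" where
  "Delta a f = (\<lambda>x. f (x + a) - f x)"

definition diffs_vanish :: "nat \<Rightarrow> ('a::ab_group_add \<Rightarrow> 'b::ab_group_add) \<Rightarrow> bool" where
  "diffs_vanish n f \<longleftrightarrow> (\<forall>as. length as = Suc n \<longrightarrow> foldr Delta as f = (\<lambda>_. 0))"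

text \<open>Functional degree, with values in {-inf} \<union> N \<union> {inf}, embedded in ereal.\<close>
definition fdeg :: "('a::ab_group_add \<Rightarrow> 'b::ab_group_add) \<Rightarrow> ereal" where
  "fdeg f = (if f = (\<lambda>_. 0) then -\<infinity>
             else if \<exists>n. diffs_vanish n f then ereal (real (LEAST n. diffs_vanish n f))
             else \<infinity>)"

definition delta_AB :: "'a::ab_group_add itself \<Rightarrow> 'b::ab_group_add itself \<Rightarrow> ereal" where
  "delta_AB TA TB = Sup (range (fdeg :: ('a \<Rightarrow> 'b) \<Rightarrow> ereal))"

definition delta_fun :: "'a \<Rightarrow> 'b::zero \<Rightarrow> 'a \<Rightarrow> 'b" where
  "delta_fun a b = (\<lambda>x. if x = a then b else 0)"

definition add_grp :: "'a::ab_group_add monoid" where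
  "add_grp = \<lparr>carrier = UNIV, monoid.mult = (+), one = 0\<rparr>"

end

theory Submission
  imports Defs
begin


lemma nsmul_0[simp]: "nsmul 0 x = 0" by (simp add: nsmul_def)
lemma nsmul_Suc: "nsmul (Suc n) x = x + nsmul n x" by (simp add: nsmul_def add.commute)
lemma nsmul_1[simp]: "nsmul 1 x = x" by (simp add: nsmul_def)
lemma nsmul_Suc0[simp]: "nsmul (Suc 0) x = x" by (simp add: nsmul_def)
lemma nsmul_add: "nsmul (m + n) x = nsmul m x + nsmul n x"
  by (induction m) (simp_all add: nsmul_Suc add.assoc)
lemma nsmul_mult: "nsmul (m * n) x = nsmul m (nsmul n x)"
  by (induction m) (simp_all add: nsmul_Suc nsmul_add)
lemma nsmul_zero[simp]: "nsmul n (0::'a::ab_group_add) = 0"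
  by (induction n) (simp_all add: nsmul_Suc)
lemma nsmul_plus: "nsmul n (x + y) = nsmul n x + nsmul n (y::'a::ab_group_add)"
  by (induction n) (simp_all add: nsmul_Suc algebra_simps)
lemma nsmul_uminus: "nsmul n (- x) = - nsmul n (x::'a::ab_group_add)"
proof -
  have "nsmul n x + nsmul n (- x) = nsmul n (x + - x)" by (rule nsmul_plus[symmetric])
  also have "\<dots> = 0" by simp
  finally show ?thesis by (rule minus_unique[symmetric])
qed
lemma nsmul_minus: "nsmul n (x - y) = nsmul n x - nsmul n (y::'a::ab_group_add)"
  by (simp only: diff_conv_add_uminus nsmul_plus nsmul_uminus)
lemma nsmul_sum: "nsmul n (sum f S) = (\<Sum>i\<in>S. nsmul n (f i :: 'a::ab_group_add))"
  by (induction S rule: infinite_finite_induct) (simp_all add: nsmul_plus)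
lemma sum_list_replicate_nsmul: "sum_list (replicate n x) = nsmul n x"
  by (induction n) (simp_all add: nsmul_Suc)
lemma nsmul_comm: "nsmul m (nsmul n x) = nsmul n (nsmul m x)"
  by (metis nsmul_mult mult.commute)

section \<open>element order\<close>

lemma elem_order_pos_iff: "elem_order x > 0 \<longleftrightarrow> (\<exists>n>0. nsmul n x = 0)"
proof
  assume "elem_order x > 0" thus "\<exists>n>0. nsmul n x = 0" unfolding elem_order_def by (auto split: if_splits)
next
  assume h: "\<exists>n>0. nsmul n x = 0"
  hence "(LEAST n. n > 0 \<and> nsmul n x = 0) > 0" by (metis (mono_tags, lifting) LeastI)
  thus "elem_order x > 0" using h unfolding elem_order_def by simp
qed

lemma elem_order_kill: "nsmul (elem_order x) x = 0"
proof (cases "\<exists>n>0. nsmul n x = 0")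
  case True
  hence "(LEAST n. n > 0 \<and> nsmul n x = 0) > 0 \<and> nsmul (LEAST n. n > 0 \<and> nsmul n x = 0) x = 0"
    by (metis (mono_tags, lifting) LeastI)
  thus ?thesis using True unfolding elem_order_def by simp
next
  case False thus ?thesis by (simp only: elem_order_def if_not_P[OF False] if_False nsmul_0)
qed

lemma elem_order_least: "0 < n \<Longrightarrow> n < elem_order x \<Longrightarrow> nsmul n x \<noteq> 0"
proof
  assume a: "0 < n" "n < elem_order x" "nsmul n x = 0"
  hence "\<exists>n>0. nsmul n x = 0" by blast
  hence e: "elem_order x = (LEAST n. n > 0 \<and> nsmul n x = 0)" by (simp only: elem_order_def if_P)
  have "(LEAST n. n > 0 \<and> nsmul n x = 0) \<le> n" using a by (intro Least_le) simp
  thus False using a e by simp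
qed

lemma nsmul_mod_order: "nsmul n x = nsmul (n mod elem_order x) x"
proof -
  have "n = elem_order x * (n div elem_order x) + n mod elem_order x" by simp
  hence "nsmul n x = nsmul (elem_order x * (n div elem_order x)) x + nsmul (n mod elem_order x) x"
    by (metis nsmul_add)
  also have "nsmul (elem_order x * (n div elem_order x)) x = nsmul (n div elem_order x) (nsmul (elem_order x) x)"
    by (simp add: nsmul_mult[symmetric] mult.commute)
  finally have "nsmul n x = nsmul (n div elem_order x) (nsmul (elem_order x) x) + nsmul (n mod elem_order x) x" .
  thus ?thesis by (simp add: elem_order_kill)
qed

lemma elem_order_dvd_iff: "elem_order x > 0 \<Longrightarrow> nsmul n x = 0 \<longleftrightarrow> elem_order x dvd n"
proof
  assume p: "elem_order x > 0" and "nsmul n x = 0"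
  hence "nsmul (n mod elem_order x) x = 0" using nsmul_mod_order by metis
  moreover have "n mod elem_order x < elem_order x" using p by simp
  ultimately have "n mod elem_order x = 0" using elem_order_least[of "n mod elem_order x" x] by auto
  thus "elem_order x dvd n" by auto
next
  assume "elem_order x dvd n"
  then obtain k where "n = elem_order x * k" by (auto simp: dvd_def)
  thus "nsmul n x = 0" by (simp add: mult.commute nsmul_mult elem_order_kill)
qed

lemma elem_order_dvd: "nsmul n x = 0 \<Longrightarrow> n > 0 \<Longrightarrow> elem_order x dvd n"
  using elem_order_dvd_iff elem_order_pos_iff by blast

lemma elem_order_eqI: "n > 0 \<Longrightarrow> nsmul n x = 0 \<Longrightarrow> (\<And>m. 0 < m \<Longrightarrow> m < n \<Longrightarrow> nsmul m x \<noteq> 0) \<Longrightarrow> elem_order x = n"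
proof -
  assume a: "n > 0" "nsmul n x = 0" "\<And>m. 0 < m \<Longrightarrow> m < n \<Longrightarrow> nsmul m x \<noteq> 0"
  have pos: "elem_order x > 0" using a elem_order_pos_iff by blast
  have "elem_order x dvd n" using a elem_order_dvd by blast
  hence le: "elem_order x \<le> n" using a by (simp add: dvd_imp_le)
  show ?thesis
  proof (rule ccontr)
    assume "elem_order x \<noteq> n" hence "elem_order x < n" using le by simp
    thus False using a(3)[of "elem_order x"] pos elem_order_kill by blast
  qed
qed

lemma elem_order_one_iff: "elem_order x = 1 \<longleftrightarrow> x = 0"
proof
  assume "elem_order x = 1" thus "x = 0" using elem_order_kill[of x] by simp
next
  assume "x = 0" thus "elem_order x = 1" by (intro elem_order_eqI) auto
qed

lemma elem_order_finite: "finite (UNIV :: 'a set) \<Longrightarrow> elem_order (x::'a::ab_group_add) > 0"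
proof -
  assume fin: "finite (UNIV :: 'a set)"
  have "\<not> inj (\<lambda>n::nat. nsmul n x)"
  proof
    assume i: "inj (\<lambda>n::nat. nsmul n x)"
    have "finite (range (\<lambda>n::nat. nsmul n x))" by (rule finite_subset[OF subset_UNIV fin])
    hence "finite (UNIV :: nat set)" using i by (rule finite_imageD)
    thus False by simp
  qed
  then obtain i j where ij: "i \<noteq> j" "nsmul i x = nsmul j x" unfolding inj_def by blast
  have key: "\<exists>n>0. nsmul n x = 0" if "i < j" "nsmul i x = nsmul j x" for i j :: nat
  proof -
    have "nsmul j x = nsmul ((j - i) + i) x" using that(1) by simp
    also have "\<dots> = nsmul (j - i) x + nsmul i x" by (rule nsmul_add)
    finally have "nsmul j x = nsmul (j - i) x + nsmul i x" .
    hence "nsmul (j - i) x = 0" using that by simp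
    thus "\<exists>n>0. nsmul n x = 0" using that by (intro exI[of _ "j-i"]) simp
  qed
  have "i < j \<or> j < i" using ij(1) by arith
  hence "\<exists>n>0. nsmul n x = 0" using key ij(2) by metis
  thus ?thesis using elem_order_pos_iff by blast
qed



definition pw :: "nat \<Rightarrow> ('a \<Rightarrow> 'b::ab_group_add) \<Rightarrow> 'a \<Rightarrow> 'b" where
  "pw n g = (\<lambda>x. nsmul n (g x))"

lemma pw_apply: "pw n g x = nsmul n (g x)" by (simp add: pw_def)
lemma pw_mult: "pw (m * n) g = pw m (pw n g)" by (simp add: pw_def nsmul_mult)

lemma Delta_apply: "Delta a f x = f (x + a) - f x" by (simp add: Delta_def)

lemma Delta_plus: "Delta a (\<lambda>x. f x + g x) = (\<lambda>x. Delta a f x + Delta a g x)"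
  by (simp add: fun_eq_iff Delta_def algebra_simps)
lemma Delta_uminus: "Delta a (\<lambda>x. - f x) = (\<lambda>x. - Delta a f x)"
  by (simp add: fun_eq_iff Delta_def algebra_simps)
lemma Delta_zero[simp]: "Delta a (\<lambda>x. 0) = (\<lambda>x. 0)"
  by (simp add: fun_eq_iff Delta_def)
lemma Delta_pw: "Delta a (pw n f) = pw n (Delta a f)"
  by (simp add: fun_eq_iff Delta_def pw_def nsmul_minus)
lemma Delta_sum: "Delta a (\<lambda>x. \<Sum>i\<in>S. F i x) = (\<lambda>x. \<Sum>i\<in>S. Delta a (F i) x)"
  by (simp add: fun_eq_iff Delta_def sum_subtractf)
lemma Delta_comm: "Delta a (Delta b f) = Delta b (Delta a f)"
  by (simp add: fun_eq_iff Delta_def algebra_simps)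
lemma Delta_add_elem: "Delta (a + b) f = (\<lambda>x. Delta a f x + Delta b f x + Delta a (Delta b f) x)"
  by (simp add: fun_eq_iff Delta_def algebra_simps)
lemma Delta_0elem: "Delta 0 f = (\<lambda>x. 0)"
  by (simp add: fun_eq_iff Delta_def)

lemma Deltan_plus: "(Delta a ^^ n) (\<lambda>x. f x + g x) = (\<lambda>x. (Delta a ^^ n) f x + (Delta a ^^ n) g x)"
  by (induction n) (simp_all add: Delta_plus)
lemma Deltan_uminus: "(Delta a ^^ n) (\<lambda>x. - f x) = (\<lambda>x. - (Delta a ^^ n) f x)"
  by (induction n) (simp_all add: Delta_uminus)
lemma Deltan_zero[simp]: "(Delta a ^^ n) (\<lambda>x. 0) = (\<lambda>x. 0)"
  by (induction n) simp_all
lemma Deltan_pw: "(Delta a ^^ n) (pw m f) = pw m ((Delta a ^^ n) f)"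
  by (induction n) (simp_all add: Delta_pw)
lemma Deltan_sum: "(Delta a ^^ n) (\<lambda>x. \<Sum>i\<in>S. F i x) = (\<lambda>x. \<Sum>i\<in>S. (Delta a ^^ n) (F i) x)"
proof (induction n)
  case 0 show ?case by simp
next
  case (Suc n) show ?case by (simp add: Suc Delta_sum)
qed
lemma Deltan_comm: "(Delta a ^^ n) (Delta b f) = Delta b ((Delta a ^^ n) f)"
  by (induction n) (simp_all add: Delta_comm)
lemma Deltan_comm2: "(Delta a ^^ m) ((Delta b ^^ n) f) = (Delta b ^^ n) ((Delta a ^^ m) f)"
  by (induction n) (simp_all add: Deltan_comm)
lemma Deltan_add: "(Delta a ^^ (m + n)) f = (Delta a ^^ m) ((Delta a ^^ n) f)"
  by (simp add: funpow_add)
lemma Deltan_Suc2: "(Delta a ^^ Suc n) f = (Delta a ^^ n) (Delta a f)"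
  by (simp add: funpow_Suc_right del: funpow.simps)

lemma foldr_replicate_Delta: "foldr Delta (replicate n a) f = (Delta a ^^ n) f"
  by (induction n) simp_all
lemma foldr_Delta_comm: "foldr Delta as (Delta b f) = Delta b (foldr Delta as f)"
  by (induction as) (simp_all add: Delta_comm)
lemma foldr_Delta_comm2: "foldr Delta as (foldr Delta bs f) = foldr Delta bs (foldr Delta as f)"
  by (induction bs) (simp_all add: foldr_Delta_comm)
lemma foldr_Delta_zero[simp]: "foldr Delta as (\<lambda>x. 0) = (\<lambda>x. 0)"
  by (induction as) simp_all
lemma foldr_Delta_pw: "foldr Delta as (pw m f) = pw m (foldr Delta as f)"
  by (induction as) (simp_all add: Delta_pw)

section \<open>subsequence expansion\<close>

lemma subseqs_Cons_set: "set (subseqs (a # as)) = (Cons a) ` set (subseqs as) \<union> set (subseqs as)"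
  by (simp add: Let_def)

lemma subseqs_length: "ys \<in> set (subseqs as) \<Longrightarrow> length ys \<le> length as"
proof (induction as arbitrary: ys)
  case Nil thus ?case by simp
next
  case (Cons a as) thus ?case by (fastforce simp: Let_def)
qed

lemma subseqs_replicate: "ys \<in> set (subseqs (replicate n e)) \<Longrightarrow> \<exists>c\<le>n. ys = replicate c e"
proof (induction n arbitrary: ys)
  case 0 thus ?case by simp
next
  case (Suc n)
  from Suc.prems have "ys \<in> (Cons e) ` set (subseqs (replicate n e)) \<or> ys \<in> set (subseqs (replicate n e))"
    by (simp add: Let_def)
  thus ?case
  proof
    assume "ys \<in> (Cons e) ` set (subseqs (replicate n e))"
    then obtain zs where "zs \<in> set (subseqs (replicate n e))" "ys = e # zs" by blast
    with Suc.IH obtain c where "c \<le> n" "zs = replicate c e" by blast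
    thus ?thesis using \<open>ys = e # zs\<close> by (intro exI[of _ "Suc c"]) simp
  next
    assume "ys \<in> set (subseqs (replicate n e))"
    with Suc.IH obtain c where "c \<le> n" "ys = replicate c e" by blast
    thus ?thesis by (intro exI[of _ c]) simp
  qed
qed

lemma Z0: "(\<forall>ys\<in>set (subseqs as). g (x + sum_list ys) = 0) \<Longrightarrow> foldr Delta as g x = 0"
proof (induction as arbitrary: x)
  case Nil thus ?case by simp
next
  case (Cons a as)
  have 1: "foldr Delta as g (x + a) = 0"
  proof (rule Cons.IH, rule ballI)
    fix ys assume "ys \<in> set (subseqs as)"
    hence "a # ys \<in> set (subseqs (a # as))" by (simp add: Let_def)
    hence "g (x + sum_list (a # ys)) = 0" using Cons.prems by blast
    thus "g (x + a + sum_list ys) = 0" by (simp add: add.assoc)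
  qed
  have 2: "foldr Delta as g x = 0"
    using Cons.prems by (intro Cons.IH) (auto simp: Let_def)
  have "foldr Delta (a # as) g x = foldr Delta as g (x + a) - foldr Delta as g x"
    by (simp only: foldr_Cons o_apply Delta_apply)
  thus ?case using 1 2 by simp
qed

lemma Z1: "(\<forall>ys\<in>set (subseqs as). ys \<noteq> as \<longrightarrow> g (x + sum_list ys) = 0) \<Longrightarrow>
   foldr Delta as g x = g (x + sum_list as)"
proof (induction as arbitrary: x)
  case Nil thus ?case by simp
next
  case (Cons a as)
  have 1: "foldr Delta as g (x + a) = g (x + a + sum_list as)"
  proof (rule Cons.IH, intro ballI impI)
    fix ys assume "ys \<in> set (subseqs as)" "ys \<noteq> as"
    hence "a # ys \<in> set (subseqs (a # as))" "a # ys \<noteq> a # as" by (simp_all add: Let_def)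
    hence "g (x + sum_list (a # ys)) = 0" using Cons.prems by blast
    thus "g (x + a + sum_list ys) = 0" by (simp add: add.assoc)
  qed
  have 2: "foldr Delta as g x = 0"
  proof (rule Z0, rule ballI)
    fix ys assume y: "ys \<in> set (subseqs as)"
    hence "length ys \<le> length as" by (rule subseqs_length)
    hence "ys \<noteq> a # as" by auto
    moreover have "ys \<in> set (subseqs (a # as))" using y by (simp add: Let_def)
    ultimately show "g (x + sum_list ys) = 0" using Cons.prems by blast
  qed
  have "foldr Delta (a # as) g x = foldr Delta as g (x + a) - foldr Delta as g x"
    by (simp only: foldr_Cons o_apply Delta_apply)
  thus ?case using 1 2 by (simp add: add.assoc)
qed



lemma diffs_vanish_Suc: "diffs_vanish n f \<Longrightarrow> diffs_vanish (Suc n) f"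
  unfolding diffs_vanish_def
proof (intro allI impI)
  fix as :: "'a list" assume h: "\<forall>as. length as = Suc n \<longrightarrow> foldr Delta as f = (\<lambda>_. 0)"
    and l: "length as = Suc (Suc n)"
  then obtain a bs where "as = a # bs" "length bs = Suc n" by (cases as) auto
  thus "foldr Delta as f = (\<lambda>_. 0)" using h by simp
qed

lemma diffs_vanish_mono: assumes "diffs_vanish n f" "n \<le> m" shows "diffs_vanish m f"
  using assms(2) by (induction m rule: dec_induct) (auto intro: diffs_vanish_Suc assms(1))

lemma not_vanishI: assumes l: "length as = Suc n" and nz: "foldr Delta as f x \<noteq> 0" shows "\<not> diffs_vanish n f"
proof
  assume "diffs_vanish n f"
  hence "foldr Delta as f = (\<lambda>_. 0)" using l by (simp add: diffs_vanish_def)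
  thus False using nz by simp
qed

lemma vanish_zero: "diffs_vanish n (\<lambda>_. 0)"
  unfolding diffs_vanish_def by simp

lemma fdeg_ge: "\<not> diffs_vanish n f \<Longrightarrow> ereal (real (Suc n)) \<le> fdeg f"
proof -
  assume nv: "\<not> diffs_vanish n f"
  have nz: "f \<noteq> (\<lambda>_. 0)" using nv vanish_zero by metis
  show ?thesis
  proof (cases "\<exists>m. diffs_vanish m f")
    case True
    have "Suc n \<le> (LEAST m. diffs_vanish m f)"
    proof (rule ccontr)
      assume "\<not> Suc n \<le> (LEAST m. diffs_vanish m f)"
      hence "(LEAST m. diffs_vanish m f) \<le> n" by simp
      moreover have "diffs_vanish (LEAST m. diffs_vanish m f) f" using True by (metis LeastI)
      ultimately show False using nv diffs_vanish_mono by blast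
    qed
    thus ?thesis using True nz by (simp add: fdeg_def)
  next
    case False thus ?thesis using nz by (simp add: fdeg_def)
  qed
qed

lemma fdeg_le: "diffs_vanish n f \<Longrightarrow> fdeg f \<le> ereal (real n)"
proof -
  assume v: "diffs_vanish n f"
  show ?thesis
  proof (cases "f = (\<lambda>_. 0)")
    case True thus ?thesis by (simp add: fdeg_def)
  next
    case False
    have "(LEAST m. diffs_vanish m f) \<le> n" using v by (rule Least_le)
    thus ?thesis using v False by (auto simp: fdeg_def)
  qed
qed

lemma fdeg_less_inf: assumes "diffs_vanish n f" shows "fdeg f < \<infinity>"
proof -
  have "fdeg f \<le> ereal (real n)" using assms by (rule fdeg_le)
  also have "\<dots> < \<infinity>" by simp
  finally show ?thesis .
qed

lemma fdeg_inf: "(\<And>n. \<not> diffs_vanish n f) \<Longrightarrow> fdeg f = \<infinity>"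
proof (rule ereal_top)
  fix B :: real assume h: "\<And>n. \<not> diffs_vanish n f"
  obtain n :: nat where "B \<le> real n" using real_arch_simple by blast
  also have "ereal (real n) \<le> ereal (real (Suc n))" by simp
  also have "\<dots> \<le> fdeg f" using h fdeg_ge by blast
  finally show "ereal B \<le> fdeg f" by simp
qed

lemma delta_AB_inf: "(\<And>n. \<exists>f::'a::ab_group_add \<Rightarrow> 'b::ab_group_add. \<not> diffs_vanish n f) \<Longrightarrow>
   delta_AB TYPE('a) TYPE('b) = \<infinity>"
proof (unfold delta_AB_def, rule ereal_top)
  fix B :: real assume h: "\<And>n. \<exists>f::'a \<Rightarrow> 'b. \<not> diffs_vanish n f"
  obtain n :: nat where n: "B \<le> real n" using real_arch_simple by blast
  obtain f :: "'a \<Rightarrow> 'b" where "\<not> diffs_vanish n f" using h by blast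
  hence f: "ereal (real (Suc n)) \<le> fdeg f" by (rule fdeg_ge)
  have "ereal B \<le> ereal (real (Suc n))" using n by simp
  also have "\<dots> \<le> fdeg f" by (rule f)
  also have "\<dots> \<le> Sup (range (fdeg :: ('a \<Rightarrow> 'b) \<Rightarrow> ereal))" by (rule Sup_upper) simp
  finally show "ereal B \<le> Sup (range (fdeg :: ('a \<Rightarrow> 'b) \<Rightarrow> ereal))" .
qed

lemma delta_AB_eq: "(\<And>f::'a::ab_group_add \<Rightarrow> 'b::ab_group_add. diffs_vanish D f) \<Longrightarrow>
   \<not> diffs_vanish n (g::'a \<Rightarrow> 'b) \<Longrightarrow> D = Suc n \<Longrightarrow>
   delta_AB TYPE('a) TYPE('b) = ereal (real D)"
proof (unfold delta_AB_def, rule antisym)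
  assume h: "\<And>f::'a \<Rightarrow> 'b. diffs_vanish D f" and g: "\<not> diffs_vanish n g" and D: "D = Suc n"
  show "Sup (range (fdeg :: ('a \<Rightarrow> 'b) \<Rightarrow> ereal)) \<le> ereal (real D)"
    by (rule Sup_least) (auto intro: fdeg_le h)
  have "ereal (real D) \<le> fdeg g" using fdeg_ge[OF g] D by simp
  also have "\<dots> \<le> Sup (range (fdeg :: ('a \<Rightarrow> 'b) \<Rightarrow> ereal))" by (rule Sup_upper) simp
  finally show "ereal (real D) \<le> Sup (range (fdeg :: ('a \<Rightarrow> 'b) \<Rightarrow> ereal))" .
qed

lemma delta_AB_inf2: "fdeg (f::'a::ab_group_add \<Rightarrow> 'b::ab_group_add) = \<infinity> \<Longrightarrow> delta_AB TYPE('a) TYPE('b) = \<infinity>"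
proof -
  assume "fdeg f = \<infinity>"
  hence "\<infinity> \<le> Sup (range (fdeg :: ('a \<Rightarrow> 'b) \<Rightarrow> ereal))" by (metis Sup_upper rangeI)
  thus ?thesis by (simp add: delta_AB_def top_unique[unfolded top_ereal_def])
qed

lemma good_list_exists:
  assumes inf: "infinite (UNIV :: 'a::ab_group_add set)"
  shows "\<exists>as::'a list. length as = n \<and> (\<forall>ys\<in>set (subseqs as). ys \<noteq> as \<longrightarrow> sum_list ys \<noteq> sum_list as)"
proof (induction n)
  case 0 show ?case by simp
next
  case (Suc n)
  then obtain as :: "'a list" where l: "length as = n"
    and g: "\<forall>ys\<in>set (subseqs as). ys \<noteq> as \<longrightarrow> sum_list ys \<noteq> sum_list as" by blast
  have "finite ((\<lambda>ys. sum_list ys - sum_list as) ` set (subseqs as))" by simp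
  then obtain a where a: "a \<notin> (\<lambda>ys. sum_list ys - sum_list as) ` set (subseqs as)"
    using ex_new_if_finite[OF inf] by blast
  have "\<forall>ys\<in>set (subseqs (a # as)). ys \<noteq> a # as \<longrightarrow> sum_list ys \<noteq> sum_list (a # as)"
  proof (intro ballI impI)
    fix ys assume y: "ys \<in> set (subseqs (a # as))" "ys \<noteq> a # as"
    hence "ys \<in> (Cons a) ` set (subseqs as) \<or> ys \<in> set (subseqs as)" by (simp add: Let_def)
    thus "sum_list ys \<noteq> sum_list (a # as)"
    proof
      assume "ys \<in> (Cons a) ` set (subseqs as)"
      then obtain zs where z: "zs \<in> set (subseqs as)" "ys = a # zs" by blast
      hence "zs \<noteq> as" using y by simp
      hence "sum_list zs \<noteq> sum_list as" using g z by blast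
      thus ?thesis using z by simp
    next
      assume z: "ys \<in> set (subseqs as)"
      have "a \<noteq> sum_list ys - sum_list as" using a z by blast
      thus ?thesis by (auto simp: algebra_simps)
    qed
  qed
  thus ?case using l by (intro exI[of _ "a # as"]) simp
qed

lemma part_a:
  assumes inf: "infinite (UNIV :: 'a::ab_group_add set)" and b: "(b::'b::ab_group_add) \<noteq> 0"
  shows "fdeg (delta_fun (0::'a) b) = \<infinity>"
proof (rule fdeg_inf)
  fix n
  obtain as :: "'a list" where l: "length as = Suc n"
    and g: "\<forall>ys\<in>set (subseqs as). ys \<noteq> as \<longrightarrow> sum_list ys \<noteq> sum_list as"
    using good_list_exists[OF inf] by blast
  have "foldr Delta as (delta_fun 0 b) (- sum_list as) = delta_fun 0 b (- sum_list as + sum_list as)"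
  proof (rule Z1, intro ballI impI)
    fix ys assume "ys \<in> set (subseqs as)" "ys \<noteq> as"
    hence "sum_list ys \<noteq> sum_list as" using g by blast
    hence "sum_list ys - sum_list as \<noteq> 0" by simp
    moreover have "- sum_list as + sum_list ys = sum_list ys - sum_list as" by (simp add: add.commute)
    ultimately have "- sum_list as + sum_list ys \<noteq> 0" by simp
    thus "delta_fun 0 b (- sum_list as + sum_list ys) = 0" by (simp add: delta_fun_def)
  qed
  also have "\<dots> = b" by (simp add: delta_fun_def)
  finally have "foldr Delta as (delta_fun 0 b) (- sum_list as) \<noteq> 0" using b by simp
  note nv = not_vanishI[OF l this]
  show "\<not> diffs_vanish n (delta_fun (0::'a) b)" using nv by simp
qed



lemma Deltan_apply_sum: "(\<Sum>j<m. Delta a g (x + nsmul j a)) = g (x + nsmul m a) - g x"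
proof -
  have "(\<Sum>j<m. Delta a g (x + nsmul j a)) = (\<Sum>j<m. g (x + nsmul (Suc j) a) - g (x + nsmul j a))"
    by (intro sum.cong) (simp_all add: Delta_apply nsmul_Suc algebra_simps)
  also have "\<dots> = g (x + nsmul m a) - g (x + nsmul 0 a)"
    by (rule sum_lessThan_telescope[where f = "\<lambda>j. g (x + nsmul j a)"])
  finally show ?thesis by simp
qed

lemma Delta_zero_invariant: "Delta a g = (\<lambda>_. 0) \<Longrightarrow> g (x + nsmul j a) = g x"
proof (induction j)
  case 0 thus ?case by simp
next
  case (Suc j)
  have "Delta a g (x + nsmul j a) = 0" using fun_cong[OF Suc.prems] by simp
  hence "g (x + nsmul j a + a) = g (x + nsmul j a)" by (simp add: Delta_apply)
  thus ?case using Suc by (simp add: nsmul_Suc algebra_simps)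
qed

lemma lemmaB_claim:
  assumes m: "nsmul m a = 0"
  shows "k \<ge> 1 \<Longrightarrow> (Delta a ^^ k) g = (\<lambda>_. 0) \<Longrightarrow>
     nsmul (m ^ (k - 1)) (nsmul m (g x) - (\<Sum>j<m. g (x + nsmul j a))) = 0"
proof (induction k arbitrary: g x rule: dec_induct)
  case base
  hence "Delta a g = (\<lambda>_. 0)" by simp
  hence "(\<Sum>j<m. g (x + nsmul j a)) = (\<Sum>j<m. g x)"
    by (intro sum.cong) (simp_all add: Delta_zero_invariant)
  also have "\<dots> = nsmul m (g x)" by (simp add: nsmul_def)
  finally have "(\<Sum>j<m. g (x + nsmul j a)) = nsmul m (g x)" .
  thus ?case by simp
next
  case (step k)
  have "(Delta a ^^ k) (Delta a g) = (\<lambda>_. 0)"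
    using step.prems by (simp add: Deltan_Suc2[symmetric])
  hence ih: "\<And>x. nsmul (m ^ (k - 1)) (nsmul m (Delta a g x) - (\<Sum>j<m. Delta a g (x + nsmul j a))) = 0"
    using step.IH by blast
  have s: "\<And>x. (\<Sum>j<m. Delta a g (x + nsmul j a)) = 0" by (simp add: Deltan_apply_sum m)
  have "\<And>x. nsmul (m ^ k) (Delta a g x) = 0"
  proof -
    fix x
    have "nsmul (m ^ k) (Delta a g x) = nsmul (m ^ (k - 1)) (nsmul m (Delta a g x))"
      using step.hyps by (simp add: nsmul_mult[symmetric] power_eq_if mult.commute)
    thus "nsmul (m ^ k) (Delta a g x) = 0" using ih[of x] s[of x] by simp
  qed
  hence "pw (m ^ k) (Delta a g) = (\<lambda>_. 0)" by (simp add: pw_def)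
  hence "Delta a (pw (m ^ k) g) = (\<lambda>_. 0)" by (simp only: Delta_pw)
  hence inv: "\<And>j. nsmul (m ^ k) (g (x + nsmul j a)) = nsmul (m ^ k) (g x)"
    using Delta_zero_invariant[of a "pw (m ^ k) g"] by (simp add: pw_def)
  have "nsmul (m ^ (Suc k - 1)) (nsmul m (g x) - (\<Sum>j<m. g (x + nsmul j a)))
      = nsmul m (nsmul (m ^ k) (g x)) - (\<Sum>j<m. nsmul (m ^ k) (g (x + nsmul j a)))"
    by (simp add: nsmul_minus nsmul_sum nsmul_comm)
  also have "\<dots> = nsmul m (nsmul (m ^ k) (g x)) - (\<Sum>j<m. nsmul (m ^ k) (g x))" by (simp only: inv)
  also have "\<dots> = 0" by (simp add: nsmul_def)
  finally show ?case .
qed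

lemma lemmaB:
  assumes ord: "elem_order a = m" and m2: "m \<ge> 2"
    and van: "(Delta a ^^ Suc n) (delta_fun 0 b) = (\<lambda>_. 0)"
  shows "nsmul (m ^ n) b = 0"
proof -
  have ma: "nsmul m a = 0" using ord elem_order_kill by blast
  have a0: "a \<noteq> 0"
  proof
    assume "a = 0" hence "elem_order a = 1" using elem_order_one_iff by blast
    thus False using ord m2 by simp
  qed
  have c: "nsmul (m ^ n) (nsmul m (delta_fun 0 b a) - (\<Sum>j<m. delta_fun 0 b (a + nsmul j a))) = 0"
    using lemmaB_claim[OF ma, of "Suc n" "delta_fun 0 b" a] van by simp
  have "\<And>j. j < m \<Longrightarrow> (a + nsmul j a = 0) \<longleftrightarrow> j = m - 1"
  proof -
    fix j assume j: "j < m"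
    have e: "a + nsmul j a = nsmul (Suc j) a" by (simp add: nsmul_Suc)
    show "(a + nsmul j a = 0) \<longleftrightarrow> j = m - 1"
    proof
      assume "a + nsmul j a = 0"
      hence "nsmul (Suc j) a = 0" using e by simp
      thus "j = m - 1" using elem_order_least[of "Suc j" a] ord j by (cases "Suc j < m") auto
    next
      assume "j = m - 1" thus "a + nsmul j a = 0" using e ma m2 by simp
    qed
  qed
  hence "(\<Sum>j<m. delta_fun 0 b (a + nsmul j a)) = (\<Sum>j<m. if j = m - 1 then b else 0)"
    by (intro sum.cong) (auto simp: delta_fun_def)
  also have "\<dots> = b" using m2 by (subst sum.delta) auto
  finally have "nsmul (m ^ n) (- b) = 0" using c a0 by (simp add: delta_fun_def)
  thus ?thesis by (simp add: nsmul_uminus)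
qed

lemma lemmaB_inf:
  assumes ord: "elem_order (a::'a::ab_group_add) = m" and m2: "m \<ge> 2"
    and nk: "\<And>k. nsmul (m ^ k) (b::'b::ab_group_add) \<noteq> 0"
  shows "fdeg (delta_fun (0::'a) b) = \<infinity>"
proof (rule fdeg_inf)
  fix n
  show "\<not> diffs_vanish n (delta_fun (0::'a) b)"
  proof
    assume "diffs_vanish n (delta_fun (0::'a) b)"
    hence "\<forall>as. length as = Suc n \<longrightarrow> foldr Delta as (delta_fun (0::'a) b) = (\<lambda>_. 0)"
      by (simp only: diffs_vanish_def)
    hence "foldr Delta (replicate (Suc n) a) (delta_fun 0 b) = (\<lambda>_. 0)"
      by (simp only: length_replicate simp_thms)
    hence "(Delta a ^^ Suc n) (delta_fun 0 b) = (\<lambda>_. 0)" by (simp only: foldr_replicate_Delta)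
    hence "nsmul (m ^ n) b = 0" using lemmaB[OF ord m2] by blast
    thus False using nk by blast
  qed
qed

lemma order_sub: assumes ord: "elem_order a = m" "m > 0" and q: "q dvd m" "q > 0"
  shows "elem_order (nsmul (m div q) a) = q"
proof (rule elem_order_eqI)
  show "q > 0" by fact
  have "nsmul q (nsmul (m div q) a) = nsmul m a" using q by (simp add: nsmul_mult[symmetric])
  thus "nsmul q (nsmul (m div q) a) = 0" using ord elem_order_kill by metis
  fix j assume j: "0 < j" "j < q"
  have "j * (m div q) < q * (m div q)" using j q ord by (intro mult_strict_right_mono) (auto simp: dvd_div_eq_0_iff)
  hence lt: "j * (m div q) < m" using q by simp
  have "0 < j * (m div q)" using j q ord by (auto simp: dvd_div_eq_0_iff)
  hence "nsmul (j * (m div q)) a \<noteq> 0" using elem_order_least lt ord by metis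
  thus "nsmul j (nsmul (m div q) a) \<noteq> 0" by (simp add: nsmul_mult)
qed

lemma all_prime_divisors_power:
  assumes p: "prime (p::nat)" and n: "n > 0" and h: "\<And>q. prime q \<Longrightarrow> q dvd n \<Longrightarrow> q = p"
  shows "\<exists>k. n = p ^ k"
proof -
  have "\<not> is_unit p" using prime_gt_1_nat[OF p] by simp
  then obtain y where y: "n = p ^ multiplicity p n * y" "\<not> p dvd y"
    using multiplicity_decompose'[of n p] n by auto
  have "y = 1"
  proof (rule ccontr)
    assume "y \<noteq> 1"
    then obtain q where q: "prime q" "q dvd y" using prime_factor_nat by blast
    hence "q dvd p ^ multiplicity p n * y" by (intro dvd_mult) 
    hence "q dvd n" using y(1) by simp
    hence "q = p" using h q by blast
    thus False using q y by simp
  qed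
  thus ?thesis using y by auto
qed

lemma prime_dvd_prime_eq: "prime (p::nat) \<Longrightarrow> prime q \<Longrightarrow> p dvd q \<Longrightarrow> p = q"
  by (auto simp: prime_nat_iff)



lemma part_b:
  assumes ntA: "\<exists>a::'a::ab_group_add. a \<noteq> 0"
      and ntB: "\<exists>b::'b::ab_group_add. b \<noteq> 0"
      and nop: "\<not> (\<exists>p::nat. prime p \<and> finite (UNIV :: 'a set) \<and>
            is_p_group p TYPE('a) \<and> is_p_group p TYPE('b))"
  shows "\<exists>b::'b. fdeg (delta_fun (0::'a) b) = \<infinity>"
proof (cases "finite (UNIV :: 'a set)")
  case False
  obtain b :: 'b where "b \<noteq> 0" using ntB by blast
  thus ?thesis using part_a[OF False] by blast
next
  case fin: True
  have pos: "\<And>a::'a. elem_order a > 0" using elem_order_finite[OF fin] by blast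
  have ge2: "\<And>a::'a. a \<noteq> 0 \<Longrightarrow> elem_order a \<ge> 2"
  proof -
    fix a :: 'a assume "a \<noteq> 0"
    hence "elem_order a \<noteq> 1" using elem_order_one_iff by blast
    thus "elem_order a \<ge> 2" using pos[of a] by linarith
  qed
  have "\<exists>(a::'a) (b::'b). elem_order a \<ge> 2 \<and> (\<forall>k. nsmul (elem_order a ^ k) b \<noteq> 0)"
  proof (rule ccontr)
    assume "\<not> (\<exists>(a::'a) (b::'b). elem_order a \<ge> 2 \<and> (\<forall>k. nsmul (elem_order a ^ k) b \<noteq> 0))"
    hence H: "\<And>(a::'a) (b::'b). elem_order a \<ge> 2 \<Longrightarrow> \<exists>k. nsmul (elem_order a ^ k) b = 0" by blast
    obtain a0 :: 'a where a0: "a0 \<noteq> 0" using ntA by blast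
    obtain b0 :: 'b where b0: "b0 \<noteq> 0" using ntB by blast
    obtain k0 where k0: "nsmul (elem_order a0 ^ k0) b0 = 0" using H ge2[OF a0] by blast
    have "elem_order a0 ^ k0 > 0" using pos[of a0] by simp
    hence ob0: "elem_order b0 > 0" using k0 elem_order_pos_iff by blast
    have "elem_order b0 \<noteq> 1" using b0 elem_order_one_iff by blast
    then obtain p where p: "prime p" "p dvd elem_order b0" using prime_factor_nat by blast
    have onlyp: "\<And>a::'a. prime (elem_order a) \<Longrightarrow> elem_order a = p"
    proof -
      fix a :: 'a assume q: "prime (elem_order a)"
      hence "elem_order a \<ge> 2" using prime_ge_2_nat by blast
      then obtain k where "nsmul (elem_order a ^ k) b0 = 0" using H by blast
      moreover have "elem_order a ^ k > 0" using q prime_gt_0_nat by simp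
      ultimately have "elem_order b0 dvd elem_order a ^ k" using elem_order_dvd by blast
      hence "p dvd elem_order a ^ k" using p(2) dvd_trans by blast
      hence "p dvd elem_order a" using p(1) prime_dvd_power by blast
      thus "elem_order a = p" using prime_dvd_prime_eq p(1) q by metis
    qed
    have pA: "\<And>a::'a. \<exists>k. elem_order a = p ^ k"
    proof -
      fix a :: 'a
      show "\<exists>k. elem_order a = p ^ k"
      proof (rule all_prime_divisors_power[OF p(1) pos])
        fix q assume q: "prime q" "q dvd elem_order a"
        have "elem_order (nsmul (elem_order a div q) a) = q"
          using q pos[of a] prime_gt_0_nat[OF q(1)] by (intro order_sub) auto
        thus "q = p" using onlyp q(1) by metis
      qed
    qed
    have pB: "\<And>b::'b. \<exists>k. elem_order b = p ^ k"
    proof -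
      fix b :: 'b
      obtain i where i: "elem_order a0 = p ^ i" using pA by blast
      have "i \<noteq> 0" using i ge2[OF a0] by (cases i) auto
      hence pd: "p dvd elem_order a0" using i by simp
      have op: "elem_order (nsmul (elem_order a0 div p) a0) = p"
        using pd pos[of a0] prime_gt_0_nat[OF p(1)] by (intro order_sub) auto
      hence "elem_order (nsmul (elem_order a0 div p) a0) \<ge> 2" using prime_ge_2_nat[OF p(1)] by simp
      then obtain k where k: "nsmul (p ^ k) b = 0" using H op by metis
      have "p ^ k > 0" using prime_gt_0_nat[OF p(1)] by simp
      hence "elem_order b dvd p ^ k" using k elem_order_dvd by blast
      thus "\<exists>k. elem_order b = p ^ k" using divides_primepow_nat[OF p(1)] by blast
    qed
    have "is_p_group p TYPE('a)" using pA by (simp add: is_p_group_def)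
    moreover have "is_p_group p TYPE('b)" using pB by (simp add: is_p_group_def)
    ultimately show False using nop p(1) fin by blast
  qed
  then obtain a :: 'a and b :: 'b where ab: "elem_order a \<ge> 2" "\<forall>k. nsmul (elem_order a ^ k) b \<noteq> 0"
    by blast
  show ?thesis using lemmaB_inf[OF refl ab(1)] ab(2) by blast
qed



lemma choose_Suc_mult: "(n choose Suc k) * Suc k = (n choose k) * (n - (k::nat))"
  by (metis binomial_absorb_comp binomial_absorption mult.commute)

lemma decomp_p: assumes p: "prime (p::nat)" and l: "l > 0"
  obtains v m where "l = p ^ v * m" "\<not> p dvd m"
proof -
  have "\<not> is_unit p" using prime_gt_1_nat[OF p] by simp
  thus ?thesis using multiplicity_decompose'[of l p] l that by auto
qed

lemma nt_coprime_choose: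
  assumes p: "prime (p::nat)" shows "i < p ^ a \<Longrightarrow> \<not> p dvd (p ^ a - 1 choose i)"
proof (induction i)
  case 0 thus ?case using prime_gt_1_nat[OF p] by simp
next
  case (Suc i)
  define N where "N = p ^ a"
  have iN: "Suc i < N" using Suc.prems N_def by simp
  have ih: "\<not> p dvd (N - 1 choose i)" using Suc iN N_def by simp
  obtain v m where vm: "Suc i = p ^ v * m" "\<not> p dvd m" using decomp_p[OF p, of "Suc i"] by auto
  show ?case
  proof
    assume pd: "p dvd (p ^ a - 1 choose Suc i)"
    have "p ^ Suc v dvd (N - 1 choose Suc i) * Suc i"
      using pd vm N_def by (simp add: mult_dvd_mono)
    hence "p ^ Suc v dvd (N - 1 choose i) * (N - 1 - i)" by (simp only: choose_Suc_mult)
    moreover have "coprime (N - 1 choose i) (p ^ Suc v)" by (rule prime_imp_power_coprime_nat[OF p ih])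
    hence "coprime (p ^ Suc v) (N - 1 choose i)" by (rule coprime_commute[THEN iffD1])
    ultimately have d1: "p ^ Suc v dvd (N - 1 - i)" using coprime_dvd_mult_right_iff by blast
    have "v < a"
    proof (rule ccontr)
      assume "\<not> v < a"
      hence "p ^ a dvd p ^ v" by (simp add: le_imp_power_dvd)
      hence "N dvd Suc i" using vm N_def by (metis dvd_mult2)
      thus False using iN by (simp add: nat_dvd_not_less)
    qed
    hence "p ^ Suc v dvd N" unfolding N_def by (intro le_imp_power_dvd) simp
    hence "p ^ Suc v dvd N - (N - 1 - i)" using d1 by (rule dvd_diff_nat)
    moreover have "N - (N - 1 - i) = Suc i" using iN by simp
    ultimately have "p ^ Suc v dvd p ^ v * m" using vm by simp
    hence "p * p ^ v dvd m * p ^ v" by (simp add: mult.commute)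
    hence "p dvd m" using prime_gt_0_nat[OF p] by simp
    thus False using vm by simp
  qed
qed

lemma nt_choose_main:
  assumes p: "prime (p::nat)" and a: "a \<ge> 1" and j: "0 < j" "j < p ^ a"
  shows "\<exists>d u. p ^ a choose j = p ^ d * u \<and> p ^ a \<le> d * ((p - 1) * p ^ (a - 1)) + j \<and>
            (j \<noteq> p ^ (a - 1) \<longrightarrow> p ^ a < d * ((p - 1) * p ^ (a - 1)) + j)"
proof -
  define N where "N = p ^ a"
  define C where "C = N choose j"
  define C' where "C' = N - 1 choose (j - 1)"
  have key: "j * C = N * C'" unfolding C_def C'_def using j times_binomial_minus1_eq by blast
  have p2: "p \<ge> 2" using prime_ge_2_nat[OF p] .
  have Na: "N = p ^ (a - 1) * p" unfolding N_def using a by (simp add: power_eq_if)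
  show ?thesis
  proof (cases "p ^ (a - 1) dvd j")
    case True
    then obtain m where m: "j = p ^ (a - 1) * m" by (auto simp: dvd_def)
    have m0: "m > 0" using m j by (cases m) auto
    have mp: "m < p" using j m Na N_def by (metis mult_less_cancel1)
    have "p ^ (a - 1) * (m * C) = p ^ (a - 1) * (p * C')" using key m Na by (simp add: ac_simps)
    hence mc: "m * C = p * C'" using prime_gt_0_nat[OF p] by simp
    have "\<not> p dvd m" using m0 mp by (simp add: nat_dvd_not_less)
    moreover have "p dvd m * C" using mc by simp
    ultimately have "p dvd C" using p prime_dvd_mult_iff by blast
    then obtain u where u: "C = p * u" by (auto simp: dvd_def)
    have w: "(p - 1) * p ^ (a - 1) + j = (p - 1 + m) * p ^ (a - 1)" using m by (simp add: algebra_simps)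
    have "N = p * p ^ (a - 1)" using Na by simp
    moreover have "p * p ^ (a - 1) \<le> (p - 1 + m) * p ^ (a - 1)" using m0 by (intro mult_right_mono) auto
    moreover have "j \<noteq> p ^ (a - 1) \<Longrightarrow> p * p ^ (a - 1) < (p - 1 + m) * p ^ (a - 1)"
    proof -
      assume "j \<noteq> p ^ (a - 1)" hence "m \<ge> 2" using m m0 by (cases m; cases "m - 1") auto
      thus ?thesis using prime_gt_0_nat[OF p] by (intro mult_strict_right_mono) auto
    qed
    ultimately show ?thesis using u w unfolding C_def N_def by (intro exI[of _ 1] exI[of _ u]) auto
  next
    case False
    obtain v m where vm: "j = p ^ v * m" "\<not> p dvd m" using decomp_p[OF p j(1)] by auto
    have va: "v + 2 \<le> a"
    proof (rule ccontr)
      assume "\<not> v + 2 \<le> a"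
      hence "p ^ (a - 1) dvd p ^ v" by (simp add: le_imp_power_dvd)
      hence "p ^ (a - 1) dvd j" using vm by (metis dvd_mult2)
      thus False using False by simp
    qed
    have "N = p ^ v * p ^ (a - v)" unfolding N_def using va by (simp add: power_add[symmetric])
    hence "p ^ v * (m * C) = p ^ v * (p ^ (a - v) * C')" using key vm by (simp add: ac_simps)
    hence "m * C = p ^ (a - v) * C'" using prime_gt_0_nat[OF p] by simp
    hence "p ^ (a - v) dvd m * C" by simp
    moreover have "coprime m (p ^ (a - v))" by (rule prime_imp_power_coprime_nat[OF p vm(2)])
    hence "coprime (p ^ (a - v)) m" by (rule coprime_commute[THEN iffD1])
    ultimately have "p ^ (a - v) dvd C" using coprime_dvd_mult_right_iff by blast
    moreover have "p ^ 2 dvd p ^ (a - v)" using va by (simp add: le_imp_power_dvd)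
    ultimately have "p ^ 2 dvd C" using dvd_trans by blast
    then obtain u where u: "C = p ^ 2 * u" by (auto simp: dvd_def)
    have "p \<le> 2 * (p - 1)" using p2 by simp
    hence "p * p ^ (a - 1) \<le> (2 * (p - 1)) * p ^ (a - 1)" by (rule mult_right_mono) simp
    hence "p * p ^ (a - 1) \<le> 2 * ((p - 1) * p ^ (a - 1))" by (simp only: mult.assoc)
    moreover have "N = p * p ^ (a - 1)" using Na by (simp only: mult.commute)
    ultimately have "N < 2 * ((p - 1) * p ^ (a - 1)) + j" using j(1) by linarith
    thus ?thesis using u unfolding C_def N_def by (intro exI[of _ 2] exI[of _ u]) auto
  qed
qed

lemma nt_choose_special:
  assumes p: "prime (p::nat)" and a: "a \<ge> 1"
  shows "\<exists>u. p ^ a choose p ^ (a - 1) = p * u \<and> \<not> p dvd u"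
proof -
  define N where "N = p ^ a"
  have Na: "N = p ^ (a - 1) * p" unfolding N_def using a by (simp add: power_eq_if)
  have j0: "p ^ (a - 1) > 0" using prime_gt_0_nat[OF p] by simp
  have key: "p ^ (a - 1) * (N choose p ^ (a - 1)) = N * (N - 1 choose (p ^ (a - 1) - 1))"
    using j0 times_binomial_minus1_eq by blast
  hence k2: "p ^ (a - 1) * (N choose p ^ (a - 1)) = p ^ (a - 1) * (p * (N - 1 choose (p ^ (a - 1) - 1)))"
    using Na by (simp add: ac_simps)
  have nz: "p ^ (a - 1) \<noteq> 0" using prime_gt_0_nat[OF p] by simp
  have e: "N choose p ^ (a - 1) = p * (N - 1 choose (p ^ (a - 1) - 1))"
    using mult_left_cancel[OF nz] k2 by blast
  have "p ^ (a - 1) \<le> p ^ a" by (rule power_increasing) (use prime_gt_0_nat[OF p] in auto)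
  hence "p ^ (a - 1) - 1 < p ^ a" using j0 by linarith
  hence "\<not> p dvd (N - 1 choose (p ^ (a - 1) - 1))" unfolding N_def by (rule nt_coprime_choose[OF p])
  thus ?thesis using e unfolding N_def by blast
qed



lemma pascal_sum:
  fixes f :: "nat \<Rightarrow> 'b::ab_group_add"
  shows "(\<Sum>j\<le>Suc n. nsmul (Suc n choose j) (f j)) =
         (\<Sum>j\<le>n. nsmul (n choose j) (f j)) + (\<Sum>j\<le>n. nsmul (n choose j) (f (Suc j)))"
proof -
  have "(\<Sum>j\<le>Suc n. nsmul (Suc n choose j) (f j)) =
        nsmul (Suc n choose 0) (f 0) + (\<Sum>j\<le>n. nsmul (Suc n choose Suc j) (f (Suc j)))"
    by (rule sum.atMost_Suc_shift)
  also have "(\<Sum>j\<le>n. nsmul (Suc n choose Suc j) (f (Suc j))) =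
        (\<Sum>j\<le>n. nsmul (n choose j) (f (Suc j))) + (\<Sum>j\<le>n. nsmul (n choose Suc j) (f (Suc j)))"
    by (simp add: nsmul_add sum.distrib)
  also have "(\<Sum>j\<le>n. nsmul (n choose Suc j) (f (Suc j))) = (\<Sum>j<n. nsmul (n choose Suc j) (f (Suc j)))"
    by (simp add: lessThan_Suc_atMost[symmetric] binomial_eq_0)
  also have "nsmul (n choose 0) (f 0) + (\<Sum>j<n. nsmul (n choose Suc j) (f (Suc j))) = (\<Sum>j\<le>n. nsmul (n choose j) (f j))"
  proof (cases n)
    case 0 thus ?thesis by simp
  next
    case (Suc m)
    have "(\<Sum>j\<le>n. nsmul (n choose j) (f j)) = nsmul (n choose 0) (f 0) + (\<Sum>j\<le>m. nsmul (n choose Suc j) (f (Suc j)))"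
      unfolding Suc by (rule sum.atMost_Suc_shift)
    thus ?thesis using Suc by (simp add: lessThan_Suc_atMost)
  qed
  ultimately show ?thesis by (simp add: ac_simps)
qed

lemma binom_shift:
  "(\<Sum>j\<le>n. nsmul (n choose j) ((Delta e ^^ j) h x)) = h (x + nsmul n e)"
proof (induction n arbitrary: x)
  case 0 thus ?case by simp
next
  case (Suc n)
  have "(\<Sum>j\<le>Suc n. nsmul (Suc n choose j) ((Delta e ^^ j) h x)) =
        (\<Sum>j\<le>n. nsmul (n choose j) ((Delta e ^^ j) h x)) + (\<Sum>j\<le>n. nsmul (n choose j) ((Delta e ^^ Suc j) h x))"
    by (rule pascal_sum)
  also have "(\<Sum>j\<le>n. nsmul (n choose j) ((Delta e ^^ Suc j) h x)) =
        (\<Sum>j\<le>n. nsmul (n choose j) ((Delta e ^^ j) h (x + e))) - (\<Sum>j\<le>n. nsmul (n choose j) ((Delta e ^^ j) h x))"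
    by (simp add: Delta_apply nsmul_minus sum_subtractf)
  finally show ?case using Suc.IH by (simp add: nsmul_Suc ac_simps)
qed

lemma DeltaN_expand:
  assumes Ne: "nsmul N e = 0" and N: "N > 0"
  shows "(Delta e ^^ N) h = (\<lambda>x. \<Sum>j\<in>{1..<N}. nsmul (N choose j) ((Delta e ^^ j) (\<lambda>y. - h y) x))"
proof
  fix x
  have "h x = (\<Sum>j\<le>N. nsmul (N choose j) ((Delta e ^^ j) h x))" using binom_shift[of N e h x] Ne by simp
  also have "{..N} = insert 0 (insert N {1..<N})" using N by auto
  also have "(\<Sum>j\<in>insert 0 (insert N {1..<N}). nsmul (N choose j) ((Delta e ^^ j) h x)) =
     h x + ((Delta e ^^ N) h x + (\<Sum>j\<in>{1..<N}. nsmul (N choose j) ((Delta e ^^ j) h x)))"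
    using N by (simp add: sum.insert)
  finally have "(Delta e ^^ N) h x = - (\<Sum>j\<in>{1..<N}. nsmul (N choose j) ((Delta e ^^ j) h x))"
    by (simp add: eq_neg_iff_add_eq_0)
  also have "\<dots> = (\<Sum>j\<in>{1..<N}. nsmul (N choose j) ((Delta e ^^ j) (\<lambda>y. - h y) x))"
    by (simp add: Deltan_uminus nsmul_uminus sum_negf)
  finally show "(Delta e ^^ N) h x = (\<Sum>j\<in>{1..<N}. nsmul (N choose j) ((Delta e ^^ j) (\<lambda>y. - h y) x))" .
qed



lemma pw_1[simp]: "pw 1 g = g" by (simp add: pw_def)
lemma pw_Suc0[simp]: "pw (Suc 0) g = g" by (simp add: pw_def)
lemma pw_zero[simp]: "pw n (\<lambda>_. 0::'b::ab_group_add) = (\<lambda>_. 0)" by (simp add: pw_def)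
lemma pw_plus: "pw n (\<lambda>x. G1 x + G2 x) = (\<lambda>x. pw n G1 x + pw n G2 x)"
  by (simp add: pw_def nsmul_plus)

locale filt =
  fixes e :: "'a::ab_group_add" and p a :: nat and P :: "('a \<Rightarrow> 'b::ab_group_add) \<Rightarrow> bool"
  assumes p: "prime p" and a: "a \<ge> 1" and Ne: "nsmul (p ^ a) e = 0"
      and Pcl: "\<And>h u. P h \<Longrightarrow> P (pw u (\<lambda>x. - h x))"
begin

definition N where "N = p ^ a"
definition L where "L = (p - 1) * p ^ (a - 1)"

lemma N_pos: "N > 0" unfolding N_def using prime_gt_0_nat[OF p] by simp
lemma L_pos: "L > 0" unfolding L_def using prime_gt_1_nat[OF p] by simp

inductive fil :: "nat \<Rightarrow> ('a \<Rightarrow> 'b) \<Rightarrow> bool" where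
  fil_zero: "fil w (\<lambda>_. 0)"
| fil_term: "i < N \<Longrightarrow> w \<le> s * L + i \<Longrightarrow> P h \<Longrightarrow> fil w (pw (p ^ s) ((Delta e ^^ i) h))"
| fil_add: "fil w G1 \<Longrightarrow> fil w G2 \<Longrightarrow> fil w (\<lambda>x. G1 x + G2 x)"

lemma fil_mono: "fil w G \<Longrightarrow> w' \<le> w \<Longrightarrow> fil w' G"
proof (induction rule: fil.induct)
  case (fil_zero w) show ?case by (rule fil.fil_zero)
next
  case (fil_term i w s h) thus ?case by (intro fil.fil_term) auto
next
  case (fil_add w G1 G2) thus ?case by (intro fil.fil_add) auto
qed

lemma fil_sum: "finite S \<Longrightarrow> (\<And>j. j \<in> S \<Longrightarrow> fil w (X j)) \<Longrightarrow> fil w (\<lambda>x. \<Sum>j\<in>S. X j x)"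
proof (induction S rule: finite_induct)
  case empty thus ?case by (simp add: fil_zero)
next
  case (insert j S)
  have "fil w (\<lambda>x. X j x + (\<lambda>x. \<Sum>j\<in>S. X j x) x)"
    using insert by (intro fil_add) auto
  thus ?case using insert by simp
qed

lemma fil_pw: "fil w G \<Longrightarrow> fil (w + m * L) (pw (p ^ m) G)"
proof (induction rule: fil.induct)
  case (fil_zero w) thus ?case by (simp add: fil.fil_zero)
next
  case (fil_term i w s h)
  have "pw (p ^ m) (pw (p ^ s) ((Delta e ^^ i) h)) = pw (p ^ (m + s)) ((Delta e ^^ i) h)"
    by (simp add: pw_mult[symmetric] power_add)
  moreover have "fil (w + m * L) (pw (p ^ (m + s)) ((Delta e ^^ i) h))"
    using fil_term by (intro fil.fil_term) (auto simp: algebra_simps)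
  ultimately show ?case by simp
next
  case (fil_add w G1 G2) thus ?case by (simp add: pw_plus fil.fil_add)
qed

lemma fil_base: "P g \<Longrightarrow> fil 0 g"
  using fil_term[of 0 0 0 g] N_pos by simp

lemma term_Delta_N:
  assumes s: "w \<le> s * L + (N - 1)" and h: "P h"
  shows "fil (Suc w) (pw (p ^ s) ((Delta e ^^ N) h))"
proof -
  have NE: "nsmul N e = 0" using Ne N_def by simp
  have "(Delta e ^^ N) h = (\<lambda>x. \<Sum>j\<in>{1..<N}. nsmul (N choose j) ((Delta e ^^ j) (\<lambda>y. - h y) x))"
    by (rule DeltaN_expand[OF NE N_pos])
  hence "pw (p ^ s) ((Delta e ^^ N) h) = (\<lambda>x. \<Sum>j\<in>{1..<N}. nsmul (p ^ s) (nsmul (N choose j) ((Delta e ^^ j) (\<lambda>y. - h y) x)))"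
    by (simp add: pw_def nsmul_sum)
  moreover have "fil (Suc w) (\<lambda>x. \<Sum>j\<in>{1..<N}. nsmul (p ^ s) (nsmul (N choose j) ((Delta e ^^ j) (\<lambda>y. - h y) x)))"
  proof (rule fil_sum)
    fix j assume j: "j \<in> {1..<N}"
    then obtain d u where du: "N choose j = p ^ d * u" "N \<le> d * L + j"
      using nt_choose_main[OF p a, of j] unfolding N_def L_def by auto
    have dp: "(Delta e ^^ j) (pw u (\<lambda>y. - h y)) = pw u ((Delta e ^^ j) (\<lambda>y. - h y))" by (rule Deltan_pw)
    have "(\<lambda>x. nsmul (p ^ s) (nsmul (N choose j) ((Delta e ^^ j) (\<lambda>y. - h y) x))) =
          pw (p ^ (s + d)) ((Delta e ^^ j) (pw u (\<lambda>y. - h y)))"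
      unfolding dp by (simp add: du(1) pw_def nsmul_mult[symmetric] power_add ac_simps)
    moreover have "fil (Suc w) (pw (p ^ (s + d)) ((Delta e ^^ j) (pw u (\<lambda>y. - h y))))"
    proof (rule fil_term)
      show "j < N" using j by simp
      show "P (pw u (\<lambda>y. - h y))" using Pcl h by blast
      show "Suc w \<le> (s + d) * L + j" using s du(2) N_pos by (simp add: algebra_simps)
    qed
    ultimately show "fil (Suc w) (\<lambda>x. nsmul (p ^ s) (nsmul (N choose j) ((Delta e ^^ j) (\<lambda>y. - h y) x)))" by simp
  qed simp
  ultimately show ?thesis by simp
qed

lemma fil_Delta: "fil w G \<Longrightarrow> fil (Suc w) (Delta e G)"
proof (induction rule: fil.induct)
  case (fil_zero w) thus ?case by (simp add: fil.fil_zero)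
next
  case (fil_term i w s h)
  have eq: "Delta e (pw (p ^ s) ((Delta e ^^ i) h)) = pw (p ^ s) ((Delta e ^^ Suc i) h)"
    by (simp only: funpow.simps o_apply Delta_pw)
  show ?case
  proof (cases "Suc i < N")
    case True
    show ?thesis unfolding eq by (rule fil.fil_term) (use fil_term True in auto)
  next
    case False
    hence "Suc i = N" using fil_term by simp
    moreover have "w \<le> s * L + (N - 1)" using fil_term \<open>Suc i = N\<close> by simp
    ultimately show ?thesis using term_Delta_N fil_term eq by metis
  qed
next
  case (fil_add w G1 G2) thus ?case by (simp add: Delta_plus fil.fil_add)
qed

lemma fil_Deltan: "fil w G \<Longrightarrow> fil (w + k) ((Delta e ^^ k) G)"
  by (induction k) (simp_all add: fil_Delta)

lemma fil_iter: "P g \<Longrightarrow> fil k ((Delta e ^^ k) g)"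
  using fil_Deltan[OF fil_base] by fastforce

lemma fil_extract:
  assumes "fil w G" and cond: "\<And>s i. i < N \<Longrightarrow> w \<le> s * L + i \<Longrightarrow> t \<le> s"
    and R0: "R (\<lambda>_. 0)" and Radd: "\<And>G1 G2. R G1 \<Longrightarrow> R G2 \<Longrightarrow> R (\<lambda>x. G1 x + G2 x)"
    and Rterm: "\<And>c i h. P h \<Longrightarrow> R (pw c ((Delta e ^^ i) h))"
  shows "\<exists>H. G = pw (p ^ t) H \<and> R H"
  using assms(1) cond
proof (induction rule: fil.induct)
  case (fil_zero w) thus ?case using R0 by (intro exI[of _ "\<lambda>_. 0"]) simp
next
  case (fil_term i w s h)
  hence ts: "t \<le> s" by blast
  hence "pw (p ^ s) ((Delta e ^^ i) h) = pw (p ^ t) (pw (p ^ (s - t)) ((Delta e ^^ i) h))"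
    by (simp add: pw_mult[symmetric] power_add[symmetric])
  thus ?case using Rterm fil_term by blast
next
  case (fil_add w G1 G2)
  then obtain H1 H2 where "G1 = pw (p ^ t) H1" "R H1" "G2 = pw (p ^ t) H2" "R H2" by blast
  thus ?case using Radd by (intro exI[of _ "\<lambda>x. H1 x + H2 x"]) (simp add: pw_plus)
qed

end



definition annsub :: "('a \<Rightarrow> 'b::ab_group_add) \<Rightarrow> ('a \<Rightarrow> 'b) \<Rightarrow> bool" where
  "annsub g h \<longleftrightarrow> (\<forall>n. (\<forall>x. nsmul n (g x) = 0) \<longrightarrow> (\<forall>x. nsmul n (h x) = 0))"

lemma annsub_refl: "annsub g g" by (simp add: annsub_def)
lemma annsub_zero: "annsub g (\<lambda>_. 0)" by (simp add: annsub_def)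
lemma annsub_add: "annsub g H1 \<Longrightarrow> annsub g H2 \<Longrightarrow> annsub g (\<lambda>x. H1 x + H2 x)"
  by (simp add: annsub_def nsmul_plus)
lemma annsub_neg: "annsub g h \<Longrightarrow> annsub g (pw u (\<lambda>x. - h x))"
  unfolding annsub_def pw_def by (metis nsmul_comm nsmul_uminus nsmul_zero neg_0_equal_iff_equal)
lemma annsub_term: "annsub g h \<Longrightarrow> annsub g (pw c ((Delta e ^^ i) h))"
proof -
  assume a: "annsub g h"
  show ?thesis unfolding annsub_def
  proof (intro allI impI)
    fix n x assume "\<forall>x. nsmul n (g x) = 0"
    hence "pw n h = (\<lambda>_. 0)" using a by (simp add: annsub_def pw_def fun_eq_iff)
    hence "(Delta e ^^ i) (pw n h) = (\<lambda>_. 0)" by simp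
    hence "pw n ((Delta e ^^ i) h) = (\<lambda>_. 0)" by (simp add: Deltan_pw)
    hence "nsmul n ((Delta e ^^ i) h x) = 0" by (simp add: pw_def fun_eq_iff)
    thus "nsmul n (pw c ((Delta e ^^ i) h) x) = 0" by (simp add: pw_def nsmul_comm)
  qed
qed
lemma annsub_trans: "annsub g h \<Longrightarrow> annsub h k \<Longrightarrow> annsub g k"
  by (simp add: annsub_def)
lemma annsub_pw: "annsub g h \<Longrightarrow> annsub g (pw c h)"
  unfolding annsub_def pw_def by (metis nsmul_comm nsmul_zero)

definition tfun :: "nat \<Rightarrow> nat \<Rightarrow> nat \<Rightarrow> nat" where
  "tfun p a k = (if k < p ^ a then 0 else Suc ((k - p ^ a) div ((p - 1) * p ^ (a - 1))))"

lemma U1: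
  assumes p: "prime p" and Ne: "nsmul (p ^ a) e = 0"
  shows "\<exists>H. (Delta e ^^ k) g = pw (p ^ tfun p a k) H \<and> annsub g H"
proof (cases "a = 0")
  case True
  hence e0: "e = 0" using Ne by simp
  show ?thesis
  proof (cases k)
    case 0 thus ?thesis using True by (intro exI[of _ g]) (simp add: tfun_def annsub_refl)
  next
    case (Suc k')
    have "(Delta e ^^ k) g = (\<lambda>_. 0)" using Suc e0 by (simp add: Delta_0elem)
    thus ?thesis by (intro exI[of _ "\<lambda>_. 0"]) (simp add: annsub_zero)
  qed
next
  case False
  interpret filt e p a "annsub g"
    using p Ne False annsub_neg by unfold_locales auto
  have f: "fil k ((Delta e ^^ k) g)" by (rule fil_iter) (rule annsub_refl)
  show ?thesis
  proof (rule fil_extract[OF f])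
    fix s i assume i: "i < N" "k \<le> s * L + i"
    show "tfun p a k \<le> s"
    proof (cases "k < N")
      case True thus ?thesis by (simp add: tfun_def N_def)
    next
      case False
      show ?thesis
      proof (rule ccontr)
        assume "\<not> tfun p a k \<le> s"
        hence "s \<le> (k - N) div L" using False by (simp add: tfun_def N_def L_def)
        hence "s * L \<le> (k - N) div L * L" by simp
        also have "\<dots> \<le> k - N" by (rule div_times_less_eq_dividend)
        finally show False using i False by linarith
      qed
    qed
  qed (auto intro: annsub_zero annsub_add annsub_term)
qed



lemma eval_delta:
  assumes ord: "elem_order e = N" and N: "N > 0" and i: "i < N"
  shows "(Delta e ^^ i) (delta_fun 0 b') e = (if i = N - 1 then b' else 0)"
proof -
  have key: "\<And>c. c \<le> i \<Longrightarrow> (e + sum_list (replicate c e) = 0 \<longleftrightarrow> c = N - 1)"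
  proof -
    fix c assume c: "c \<le> i"
    have eq: "e + sum_list (replicate c e) = nsmul (Suc c) e" by (simp add: sum_list_replicate_nsmul nsmul_Suc)
    show "(e + sum_list (replicate c e) = 0 \<longleftrightarrow> c = N - 1)"
    proof (cases "Suc c < N")
      case True
      hence "nsmul (Suc c) e \<noteq> 0" using elem_order_least[of "Suc c" e] ord by simp
      thus ?thesis using eq True by simp
    next
      case False
      hence sc: "Suc c = N" using c i by simp
      have "nsmul (Suc c) e = 0" using elem_order_kill[of e] ord sc by simp
      thus ?thesis using eq sc by simp
    qed
  qed
  have Dr: "(Delta e ^^ i) (delta_fun 0 b') = foldr Delta (replicate i e) (delta_fun 0 b')"
    by (simp only: foldr_replicate_Delta)
  show ?thesis
  proof (cases "i = N - 1")
    case True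
    have "foldr Delta (replicate i e) (delta_fun 0 b') e = delta_fun 0 b' (e + sum_list (replicate i e))"
    proof (rule Z1, intro ballI impI)
      fix ys assume ys: "ys \<in> set (subseqs (replicate i e))" "ys \<noteq> replicate i e"
      obtain c where c: "c \<le> i" "ys = replicate c e" using subseqs_replicate[OF ys(1)] by blast
      hence cn: "c \<noteq> N - 1" using ys True by auto
      have "(e + sum_list (replicate c e) = 0) = (c = N - 1)" by (rule key[OF c(1)])
      hence "e + sum_list ys \<noteq> 0" using c(2) cn by blast
      thus "delta_fun 0 b' (e + sum_list ys) = 0" by (simp add: delta_fun_def)
    qed
    also have "\<dots> = b'"
    proof -
      have "e + sum_list (replicate i e) = 0" using key[of i] True by blast
      thus ?thesis by (simp add: delta_fun_def)
    qed
    finally show ?thesis by (simp only: Dr if_P[OF True])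
  next
    case False
    have "foldr Delta (replicate i e) (delta_fun 0 b') e = 0"
    proof (rule Z0, rule ballI)
      fix ys assume ys: "ys \<in> set (subseqs (replicate i e))"
      obtain c where c: "c \<le> i" "ys = replicate c e" using subseqs_replicate[OF ys(1)] by blast
      hence cn: "c \<noteq> N - 1" using False i by auto
      have "(e + sum_list (replicate c e) = 0) = (c = N - 1)" by (rule key[OF c(1)])
      hence "e + sum_list ys \<noteq> 0" using c(2) cn by blast
      thus "delta_fun 0 b' (e + sum_list ys) = 0" by (simp add: delta_fun_def)
    qed
    thus ?thesis by (simp only: Dr if_not_P[OF False])
  qed
qed

context filt
begin

lemma fil_eval:
  assumes PD: "\<And>h. P h \<Longrightarrow> \<exists>c. h = delta_fun 0 (nsmul c b)" and ord: "elem_order e = N"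
    and f: "fil w G" and cond: "\<And>s. w \<le> s * L + (N - 1) \<Longrightarrow> t \<le> s"
  shows "\<exists>c. G e = nsmul (p ^ t) (nsmul c b)"
  using f cond
proof (induction rule: fil.induct)
  case (fil_zero w) thus ?case by (intro exI[of _ 0]) simp
next
  case (fil_term i w s h)
  obtain c where c: "h = delta_fun 0 (nsmul c b)" using PD fil_term by blast
  show ?case
  proof (cases "i = N - 1")
    case True
    hence "t \<le> s" using fil_term by blast
    have "pw (p ^ s) ((Delta e ^^ i) h) e = nsmul (p ^ s) (nsmul c b)"
      using eval_delta[OF ord N_pos fil_term(1), of "nsmul c b"] c True by (simp add: pw_def)
    also have "\<dots> = nsmul (p ^ t) (nsmul (p ^ (s - t) * c) b)"
    proof -
      have "p ^ s = p ^ t * p ^ (s - t)" using \<open>t \<le> s\<close> by (simp add: power_add[symmetric])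
      hence "p ^ s * c = p ^ t * (p ^ (s - t) * c)" by simp
      thus ?thesis by (simp only: nsmul_mult[symmetric])
    qed
    finally show ?thesis by blast
  next
    case False
    have "pw (p ^ s) ((Delta e ^^ i) h) e = 0"
      using eval_delta[OF ord N_pos fil_term(1), of "nsmul c b"] c False by (simp add: pw_def)
    thus ?thesis by (intro exI[of _ 0]) simp
  qed
next
  case (fil_add w G1 G2)
  then obtain c1 c2 where "G1 e = nsmul (p ^ t) (nsmul c1 b)" "G2 e = nsmul (p ^ t) (nsmul c2 b)" by blast
  thus ?case by (intro exI[of _ "c1 + c2"]) (simp add: nsmul_add nsmul_plus)
qed

definition u0 where "u0 = (N choose p ^ (a - 1)) div p"

lemma u0: "N choose p ^ (a - 1) = p * u0" "\<not> p dvd u0"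
proof -
  obtain u where u: "N choose p ^ (a - 1) = p * u" "\<not> p dvd u"
    using nt_choose_special[OF p a] unfolding N_def by blast
  have "u0 = u" unfolding u0_def u(1) using prime_gt_0_nat[OF p] by simp
  thus "N choose p ^ (a - 1) = p * u0" "\<not> p dvd u0" using u by auto
qed

lemma LN: "L + p ^ (a - 1) = N"
proof -
  have "L + p ^ (a - 1) = (p - 1 + 1) * p ^ (a - 1)" unfolding L_def by (simp add: algebra_simps)
  also have "\<dots> = p * p ^ (a - 1)" using prime_gt_0_nat[OF p] by simp
  also have "\<dots> = N" unfolding N_def using a by (simp add: power_eq_if)
  finally show ?thesis .
qed

lemma K:
  assumes h: "P h"
  shows "\<exists>R. (Delta e ^^ (N - 1 + L)) h = (\<lambda>x. pw p ((Delta e ^^ (N - 1)) (pw u0 (\<lambda>y. - h y))) x + R x)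
            \<and> fil (N + L) R"
proof -
  define j0 where "j0 = p ^ (a - 1)"
  define S where "S = {1..<N}"
  define F where "F = (\<lambda>j. pw (N choose j) ((Delta e ^^ (L - 1 + j)) (\<lambda>y. - h y)))"
  have j0S: "j0 \<in> S" unfolding S_def j0_def using LN L_pos prime_gt_0_nat[OF p] by auto
  have NE: "nsmul N e = 0" using Ne N_def by simp
  have e1: "(Delta e ^^ (N - 1 + L)) h = (Delta e ^^ (L - 1)) ((Delta e ^^ N) h)"
  proof -
    have "N - 1 + L = (L - 1) + N" using N_pos L_pos by simp
    thus ?thesis by (simp only: funpow_add o_apply)
  qed
  have e2: "(Delta e ^^ N) h = (\<lambda>x. \<Sum>j\<in>S. pw (N choose j) ((Delta e ^^ j) (\<lambda>y. - h y)) x)"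
    unfolding S_def pw_def by (rule DeltaN_expand[OF NE N_pos])
  have e3: "(Delta e ^^ (N - 1 + L)) h = (\<lambda>x. \<Sum>j\<in>S. F j x)"
    unfolding e1 e2 Deltan_sum F_def
    by (simp only: Deltan_pw funpow_add o_apply)
  have e4: "(\<lambda>x. \<Sum>j\<in>S. F j x) = (\<lambda>x. F j0 x + (\<Sum>j\<in>S - {j0}. F j x))"
  proof
    fix x show "(\<Sum>j\<in>S. F j x) = F j0 x + (\<Sum>j\<in>S - {j0}. F j x)"
      by (rule sum.remove[OF _ j0S]) (simp add: S_def)
  qed
  have e5: "F j0 = pw p ((Delta e ^^ (N - 1)) (pw u0 (\<lambda>y. - h y)))"
  proof -
    have l: "L - 1 + j0 = N - 1" using LN L_pos unfolding j0_def by simp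
    have "F j0 = pw (N choose j0) ((Delta e ^^ (N - 1)) (\<lambda>y. - h y))"
      unfolding F_def l ..
    hence "F j0 = pw (p * u0) ((Delta e ^^ (N - 1)) (\<lambda>y. - h y))"
      unfolding j0_def u0(1) .
    also have "\<dots> = pw p ((Delta e ^^ (N - 1)) (pw u0 (\<lambda>y. - h y)))"
      by (simp only: pw_mult Deltan_pw)
    finally show ?thesis .
  qed
  have fR: "fil (N + L) (\<lambda>x. \<Sum>j\<in>S - {j0}. F j x)"
  proof (rule fil_sum)
    fix j assume j: "j \<in> S - {j0}"
    hence j1: "0 < j" "j < p ^ a" "j \<noteq> p ^ (a - 1)" unfolding S_def j0_def N_def by auto
    obtain d u where du: "N choose j = p ^ d * u" "N < d * L + j"
      using nt_choose_main[OF p a j1(1) j1(2)] j1(3) unfolding N_def L_def by blast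
    have "fil (d * L + j) (pw (p ^ d) ((Delta e ^^ j) (pw u (\<lambda>y. - h y))))"
      using j Pcl[OF h] unfolding S_def by (intro fil_term) auto
    hence "fil (d * L + j + (L - 1)) ((Delta e ^^ (L - 1)) (pw (p ^ d) ((Delta e ^^ j) (pw u (\<lambda>y. - h y)))))"
      by (rule fil_Deltan)
    moreover have "(Delta e ^^ (L - 1)) (pw (p ^ d) ((Delta e ^^ j) (pw u (\<lambda>y. - h y)))) = F j"
      unfolding F_def du(1) by (simp only: Deltan_pw pw_mult funpow_add o_apply)
    ultimately have "fil (d * L + j + (L - 1)) (F j)" by simp
    thus "fil (N + L) (F j)" by (rule fil_mono) (use du(2) L_pos in simp)
  qed (simp add: S_def)
  show ?thesis using e3 e4 e5 fR by (intro exI[of _ "\<lambda>x. \<Sum>j\<in>S - {j0}. F j x"]) simp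
qed

end



lemma pgroup_nsmul_ne0:
  assumes p: "prime p" and pB: "\<And>y::'b::ab_group_add. \<exists>k. elem_order y = p ^ k"
    and y: "(y::'b) \<noteq> 0" and n: "\<not> p dvd n"
  shows "nsmul n y \<noteq> 0"
proof
  assume ny: "nsmul n y = 0"
  obtain k where k: "elem_order y = p ^ k" using pB by blast
  have "k \<noteq> 0" using k y elem_order_one_iff by fastforce
  hence "p dvd elem_order y" using k by simp
  moreover have "elem_order y > 0" using k prime_gt_0_nat[OF p] by simp
  hence "elem_order y dvd n" using ny elem_order_dvd_iff by blast
  ultimately show False using n dvd_trans by blast
qed

lemma L1:
  assumes p: "prime p" and a: "a \<ge> 1" and ord: "elem_order (e::'a::ab_group_add) = p ^ a"
    and pB: "\<And>y::'b::ab_group_add. \<exists>k. elem_order y = p ^ k"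
    and bm: "nsmul (p ^ m) (b::'b) \<noteq> 0"
  shows "(Delta e ^^ (p ^ a - 1 + m * ((p - 1) * p ^ (a - 1)))) (delta_fun 0 b) e \<noteq> 0"
proof -
  obtain g where g: "elem_order b = p ^ g" using pB by blast
  define ob where "ob = p ^ g"
  have b0: "b \<noteq> 0" using bm by auto
  have g1: "g \<noteq> 0" using g b0 elem_order_one_iff by fastforce
  have obb: "nsmul ob b = 0" using g elem_order_kill ob_def by metis
  have ob1: "ob \<ge> 1" unfolding ob_def using prime_gt_0_nat[OF p] by simp
  have pob: "\<not> p dvd (ob - 1)"
  proof
    assume "p dvd ob - 1"
    moreover have "p dvd ob" unfolding ob_def using g1 by simp
    ultimately have "p dvd ob - (ob - 1)" by (rule dvd_diff_nat[rotated])
    hence "p dvd 1" using ob1 by simp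
    thus False using prime_gt_1_nat[OF p] by simp
  qed
  define Pb :: "('a \<Rightarrow> 'b) \<Rightarrow> bool" where "Pb = (\<lambda>h. \<exists>c. h = delta_fun 0 (nsmul c b))"
  have negc: "\<And>c u. pw u (\<lambda>x. - delta_fun 0 (nsmul c b) x) = delta_fun 0 (nsmul (u * ((ob - 1) * c)) b)"
  proof -
    fix c u
    have "nsmul ((ob - 1) * c) b + nsmul c b = nsmul (((ob - 1) + 1) * c) b"
      by (simp only: nsmul_add[symmetric] add_mult_distrib mult_1)
    also have "\<dots> = 0" using ob1 obb by (simp add: mult.commute nsmul_mult)
    finally have "- nsmul c b = nsmul ((ob - 1) * c) b" by (metis add.commute minus_unique)
    thus "pw u (\<lambda>x. - delta_fun 0 (nsmul c b) x) = delta_fun 0 (nsmul (u * ((ob - 1) * c)) b)"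
      by (auto simp: pw_def delta_fun_def fun_eq_iff nsmul_mult)
  qed
  have Ne: "nsmul (p ^ a) e = 0" using ord elem_order_kill by metis
  interpret filt e p a Pb
  proof
    show "prime p" "a \<ge> 1" "nsmul (p ^ a) e = 0" by (fact p, fact a, fact Ne)
    fix h u assume "Pb h"
    then obtain c where "h = delta_fun 0 (nsmul c b)" unfolding Pb_def by blast
    thus "Pb (pw u (\<lambda>x. - h x))" unfolding Pb_def using negc by blast
  qed
  have ordN: "elem_order e = N" using ord N_def by simp
  have claim: "\<exists>c R. (Delta e ^^ (N - 1 + k * L)) (delta_fun 0 b) =
       (\<lambda>x. pw (p ^ k) ((Delta e ^^ (N - 1)) (delta_fun 0 (nsmul c b))) x + R x) \<and>
       \<not> p dvd c \<and> fil (N + k * L) R" for k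
  proof (induction k)
    case 0
    show ?case
    proof (intro exI[of _ 1] exI[of _ "\<lambda>_. (0::'b)"] conjI)
      show "(Delta e ^^ (N - 1 + 0 * L)) (delta_fun 0 b) =
       (\<lambda>x. pw (p ^ 0) ((Delta e ^^ (N - 1)) (delta_fun 0 (nsmul 1 b))) x + (\<lambda>_. 0) x)" by simp
      show "\<not> p dvd 1" using prime_gt_1_nat[OF p] by simp
      show "fil (N + 0 * L) (\<lambda>_. 0)" by (rule fil_zero)
    qed
  next
    case (Suc k)
    then obtain c R where cR: "(Delta e ^^ (N - 1 + k * L)) (delta_fun 0 b) =
       (\<lambda>x. pw (p ^ k) ((Delta e ^^ (N - 1)) (delta_fun 0 (nsmul c b))) x + R x)"
       "\<not> p dvd c" "fil (N + k * L) R" by blast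
    have Pc: "Pb (delta_fun 0 (nsmul c b))" unfolding Pb_def by blast
    obtain R' where R': "(Delta e ^^ (N - 1 + L)) (delta_fun 0 (nsmul c b)) =
        (\<lambda>x. pw p ((Delta e ^^ (N - 1)) (pw u0 (\<lambda>y. - delta_fun 0 (nsmul c b) y))) x + R' x)"
        "fil (N + L) R'" using K[OF Pc] by blast
    define c' where "c' = u0 * ((ob - 1) * c)"
    have c'p: "\<not> p dvd c'" unfolding c'_def using u0(2) pob cR(2) p by (simp add: prime_dvd_mult_iff)
    have R'': "(Delta e ^^ (N - 1 + L)) (delta_fun 0 (nsmul c b)) =
        (\<lambda>x. pw p ((Delta e ^^ (N - 1)) (delta_fun 0 (nsmul c' b))) x + R' x)"
      using R'(1) unfolding c'_def negc .
    have s1: "N - 1 + Suc k * L = L + (N - 1 + k * L)" by simp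
    have "(Delta e ^^ (N - 1 + Suc k * L)) (delta_fun 0 b) =
          (Delta e ^^ L) ((Delta e ^^ (N - 1 + k * L)) (delta_fun 0 b))"
      unfolding s1 by (simp only: funpow_add o_apply)
    also have "\<dots> = (\<lambda>x. (Delta e ^^ L) (pw (p ^ k) ((Delta e ^^ (N - 1)) (delta_fun 0 (nsmul c b)))) x
          + (Delta e ^^ L) R x)"
      unfolding cR(1) by (rule Deltan_plus)
    also have "(Delta e ^^ L) (pw (p ^ k) ((Delta e ^^ (N - 1)) (delta_fun 0 (nsmul c b)))) =
          pw (p ^ k) ((Delta e ^^ (N - 1 + L)) (delta_fun 0 (nsmul c b)))"
      by (simp only: Deltan_pw add.commute[of "N - 1" L] funpow_add o_apply)
    also have "\<dots> = (\<lambda>x. pw (p ^ Suc k) ((Delta e ^^ (N - 1)) (delta_fun 0 (nsmul c' b))) x + pw (p ^ k) R' x)"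
      unfolding R'' pw_plus by (simp only: pw_mult[symmetric] power_Suc mult.commute)
    finally have eq: "(Delta e ^^ (N - 1 + Suc k * L)) (delta_fun 0 b) =
        (\<lambda>x. pw (p ^ Suc k) ((Delta e ^^ (N - 1)) (delta_fun 0 (nsmul c' b))) x +
             (\<lambda>x. pw (p ^ k) R' x + (Delta e ^^ L) R x) x)" by (simp add: add.assoc)
    have f1: "fil (N + Suc k * L) (pw (p ^ k) R')"
      using fil_pw[OF R'(2), of k] by (simp add: algebra_simps)
    have f2: "fil (N + Suc k * L) ((Delta e ^^ L) R)"
      using fil_Deltan[OF cR(3), of L] by (simp add: algebra_simps)
    have f3: "fil (N + Suc k * L) (\<lambda>x. pw (p ^ k) R' x + (Delta e ^^ L) R x)"
      by (rule fil_add[OF f1 f2])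
    show ?case
      by (intro exI[of _ c'] exI[of _ "\<lambda>x. pw (p ^ k) R' x + (Delta e ^^ L) R x"] conjI)
         (simp only: eq, rule c'p, rule f3)
  qed
  obtain c R where cR: "(Delta e ^^ (N - 1 + m * L)) (delta_fun 0 b) =
       (\<lambda>x. pw (p ^ m) ((Delta e ^^ (N - 1)) (delta_fun 0 (nsmul c b))) x + R x)"
       "\<not> p dvd c" "fil (N + m * L) R" using claim by blast
  have PD: "\<And>h. Pb h \<Longrightarrow> \<exists>c. h = delta_fun 0 (nsmul c b)" unfolding Pb_def by blast
  obtain c2 where c2: "R e = nsmul (p ^ Suc m) (nsmul c2 b)"
  proof -
    have "\<exists>c. R e = nsmul (p ^ Suc m) (nsmul c b)"
    proof (rule fil_eval[OF PD ordN cR(3)])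
      fix s assume "N + m * L \<le> s * L + (N - 1)"
      hence "m * L < s * L" using N_pos by linarith
      thus "Suc m \<le> s" by simp
    qed
    thus ?thesis using that by blast
  qed
  have ev: "(Delta e ^^ (N - 1)) (delta_fun 0 (nsmul c b)) e = nsmul c b"
    using eval_delta[OF ordN N_pos, of "N - 1" "nsmul c b"] N_pos by simp
  have "(Delta e ^^ (N - 1 + m * L)) (delta_fun 0 b) e = nsmul (p ^ m) (nsmul c b) + nsmul (p ^ Suc m) (nsmul c2 b)"
    using cR(1) ev c2 by (simp add: pw_def)
  also have "\<dots> = nsmul (c + p * c2) (nsmul (p ^ m) b)"
    by (simp add: nsmul_mult[symmetric] nsmul_add[symmetric] algebra_simps)
  finally have val: "(Delta e ^^ (N - 1 + m * L)) (delta_fun 0 b) e = nsmul (c + p * c2) (nsmul (p ^ m) b)" .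
  have "\<not> p dvd (c + p * c2)" using cR(2) by (simp add: dvd_add_left_iff)
  hence "nsmul (c + p * c2) (nsmul (p ^ m) b) \<noteq> 0" using pgroup_nsmul_ne0[OF p pB bm] by blast
  thus ?thesis using val unfolding N_def L_def by simp
qed



definition monoL :: "(nat \<Rightarrow> 'a::ab_group_add) \<Rightarrow> (nat \<Rightarrow> nat) \<Rightarrow> nat list \<Rightarrow> ('a \<Rightarrow> 'b::ab_group_add) \<Rightarrow> 'a \<Rightarrow> 'b" where
  "monoL e i ls h = foldr (\<lambda>l. Delta (e l) ^^ i l) ls h"

lemma monoL_Nil[simp]: "monoL e i [] h = h" by (simp add: monoL_def)
lemma monoL_Cons: "monoL e i (l # ls) h = (Delta (e l) ^^ i l) (monoL e i ls h)" by (simp add: monoL_def)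

lemma kill_gen:
  assumes p: "prime p" and ord: "\<And>l. l \<in> set ls \<Longrightarrow> nsmul (p ^ al l) (e l) = 0"
  shows "\<exists>H. monoL e i ls h = pw (p ^ (\<Sum>l\<leftarrow>ls. tfun p (al l) (i l))) H \<and> annsub h H"
  using ord
proof (induction ls)
  case Nil thus ?case by (intro exI[of _ h]) (simp add: annsub_refl)
next
  case (Cons l ls)
  then obtain H where H: "monoL e i ls h = pw (p ^ (\<Sum>l\<leftarrow>ls. tfun p (al l) (i l))) H" "annsub h H" by auto
  obtain H' where H': "(Delta (e l) ^^ i l) H = pw (p ^ tfun p (al l) (i l)) H'" "annsub H H'"
    using U1[OF p Cons.prems[of l]] by auto
  have "monoL e i (l # ls) h = pw (p ^ (\<Sum>l\<leftarrow>ls. tfun p (al l) (i l))) (pw (p ^ tfun p (al l) (i l)) H')"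
    by (simp only: monoL_Cons H(1) Deltan_pw H'(1))
  also have "\<dots> = pw (p ^ (\<Sum>l\<leftarrow>l # ls. tfun p (al l) (i l))) H'"
    by (simp add: pw_mult[symmetric] power_add mult.commute)
  finally show ?case using annsub_trans[OF H(2) H'(2)] by blast
qed

lemma kill_zero:
  assumes p: "prime p" and ord: "\<And>l. l \<in> set ls \<Longrightarrow> nsmul (p ^ al l) (e l) = 0"
    and hK: "\<And>x. nsmul (p ^ K) (h x) = 0" and K: "K \<le> (\<Sum>l\<leftarrow>ls. tfun p (al l) (i l))"
  shows "monoL e i ls h = (\<lambda>_. 0)"
proof -
  obtain H where H: "monoL e i ls h = pw (p ^ (\<Sum>l\<leftarrow>ls. tfun p (al l) (i l))) H" "annsub h H"
    using kill_gen[of p ls al e i h] p ord by blast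
  have HK: "\<And>x. nsmul (p ^ K) (H x) = 0" using H(2) hK unfolding annsub_def by blast
  have "p ^ (\<Sum>l\<leftarrow>ls. tfun p (al l) (i l)) = p ^ ((\<Sum>l\<leftarrow>ls. tfun p (al l) (i l)) - K) * p ^ K"
    using K by (simp add: power_add[symmetric])
  thus ?thesis using H(1) HK by (simp add: pw_def fun_eq_iff nsmul_mult)
qed

lemma monoL_extract:
  "distinct ls \<Longrightarrow> j \<in> set ls \<Longrightarrow> monoL e i ls h = (Delta (e j) ^^ i j) (monoL e (i(j := 0)) ls h)"
proof (induction ls)
  case Nil thus ?case by simp
next
  case (Cons l ls)
  show ?case
  proof (cases "l = j")
    case True
    hence "j \<notin> set ls" using Cons by auto
    hence "monoL e (i(j := 0)) ls h = monoL e i ls h"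
      unfolding monoL_def by (intro foldr_cong) auto
    thus ?thesis using True by (simp only: monoL_Cons fun_upd_same funpow_0 id_apply)
  next
    case False
    hence j: "j \<in> set ls" using Cons by auto
    have dls: "distinct ls" using Cons.prems(1) by simp
    have ih: "monoL e i ls h = (Delta (e j) ^^ i j) (monoL e (i(j := 0)) ls h)" by (rule Cons.IH[OF dls j])
    have "monoL e i (l # ls) h = (Delta (e l) ^^ i l) ((Delta (e j) ^^ i j) (monoL e (i(j := 0)) ls h))"
      by (simp only: monoL_Cons ih)
    also have "\<dots> = (Delta (e j) ^^ i j) ((Delta (e l) ^^ i l) (monoL e (i(j := 0)) ls h))"
      by (rule Deltan_comm2)
    also have "(Delta (e l) ^^ i l) (monoL e (i(j := 0)) ls h) = monoL e (i(j := 0)) (l # ls) h"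
      using False by (simp add: monoL_Cons)
    finally show ?thesis .
  qed
qed

lemma monoL_Delta:
  assumes "distinct ls" "j \<in> set ls"
  shows "Delta (e j) (monoL e i ls h) = monoL e (i(j := Suc (i j))) ls h"
proof -
  have 1: "monoL e (i(j := Suc (i j))) ls h = (Delta (e j) ^^ (i(j := Suc (i j))) j) (monoL e ((i(j := Suc (i j)))(j := 0)) ls h)"
    by (rule monoL_extract[OF assms])
  have 2: "monoL e i ls h = (Delta (e j) ^^ i j) (monoL e (i(j := 0)) ls h)"
    by (rule monoL_extract[OF assms])
  show ?thesis unfolding 1 2 by (simp only: fun_upd_same fun_upd_upd funpow.simps o_apply)
qed

lemma sum_update_Suc: "finite S \<Longrightarrow> j \<in> S \<Longrightarrow> sum (i(j := Suc (i j))) S = Suc (sum i S)"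
proof -
  assume S: "finite S" "j \<in> S"
  have "sum (i(j := Suc (i j))) S = Suc (i j) + sum (i(j := Suc (i j))) (S - {j})"
    using S by (simp add: sum.remove)
  also have "sum (i(j := Suc (i j))) (S - {j}) = sum i (S - {j})" by (intro sum.cong) auto
  also have "Suc (i j) + sum i (S - {j}) = Suc (sum i S)" using S by (simp add: sum.remove)
  finally show ?thesis .
qed

inductive mf :: "(nat \<Rightarrow> 'a::ab_group_add) \<Rightarrow> nat \<Rightarrow> (('a \<Rightarrow> 'b::ab_group_add) \<Rightarrow> bool) \<Rightarrow> nat \<Rightarrow> ('a \<Rightarrow> 'b) \<Rightarrow> bool"
  for e r P where
  mf_zero: "mf e r P w (\<lambda>_. 0)"
| mf_term: "w \<le> (\<Sum>l<r. i l) \<Longrightarrow> P h \<Longrightarrow> mf e r P w (monoL e i [0..<r] h)"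
| mf_add: "mf e r P w G1 \<Longrightarrow> mf e r P w G2 \<Longrightarrow> mf e r P w (\<lambda>x. G1 x + G2 x)"

lemma mf_mono: "mf e r P w G \<Longrightarrow> w' \<le> w \<Longrightarrow> mf e r P w' G"
proof (induction rule: mf.induct)
  case (mf_zero w) show ?case by (rule mf.mf_zero)
next
  case (mf_term w i h) thus ?case by (intro mf.mf_term) auto
next
  case (mf_add w G1 G2) thus ?case by (intro mf.mf_add) auto
qed

lemma mf_Delta_gen: assumes jr: "j < r" shows "mf e r P w G \<Longrightarrow> mf e r P (Suc w) (Delta (e j) G)"
proof (induction rule: mf.induct)
  case (mf_zero w) thus ?case by (simp add: mf.mf_zero)
next
  case (mf_term w i h)
  have "Delta (e j) (monoL e i [0..<r] h) = monoL e (i(j := Suc (i j))) [0..<r] h"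
    using jr by (intro monoL_Delta) auto
  moreover have "Suc w \<le> (\<Sum>l<r. (i(j := Suc (i j))) l)"
    using mf_term jr sum_update_Suc[of "{..<r}" j i] by simp
  ultimately show ?case using mf_term by (simp add: mf.mf_term)
next
  case (mf_add w G1 G2) thus ?case by (simp add: Delta_plus mf.mf_add)
qed

lemma mf_Delta:
  assumes gen: "\<And>a. \<exists>c. a = (\<Sum>j<r. nsmul (c j) (e j))"
  shows "mf e r P w G \<Longrightarrow> mf e r P (Suc w) (Delta a G)"
proof -
  define S where "S = {a. \<forall>w G. mf e r P w G \<longrightarrow> mf e r P (Suc w) (Delta a G)}"
  have S0: "0 \<in> S" unfolding S_def by (simp add: Delta_0elem mf_zero)
  have Sadd: "x \<in> S \<Longrightarrow> y \<in> S \<Longrightarrow> x + y \<in> S" for x y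
  proof -
    assume xy: "x \<in> S" "y \<in> S"
    show "x + y \<in> S" unfolding S_def
    proof (intro CollectI allI impI)
      fix w G assume G: "mf e r P w G"
      have 1: "mf e r P (Suc w) (Delta x G)" using xy G unfolding S_def by blast
      have 2: "mf e r P (Suc w) (Delta y G)" using xy G unfolding S_def by blast
      have "mf e r P (Suc (Suc w)) (Delta x (Delta y G))" using xy 2 unfolding S_def by blast
      hence 3: "mf e r P (Suc w) (Delta x (Delta y G))" by (rule mf_mono) simp
      show "mf e r P (Suc w) (Delta (x + y) G)"
        unfolding Delta_add_elem by (intro mf_add 1 2 3)
    qed
  qed
  have Se: "j < r \<Longrightarrow> e j \<in> S" for j unfolding S_def using mf_Delta_gen by blast
  have Sn: "x \<in> S \<Longrightarrow> nsmul c x \<in> S" for x c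
    by (induction c) (simp_all add: S0 nsmul_Suc Sadd)
  have Ssum: "(\<Sum>j\<in>J. nsmul (c j) (e j)) \<in> S" if "J \<subseteq> {..<r}" for J c
  proof -
    have "finite J" using that finite_subset by blast
    thus ?thesis using that
      by (induction J rule: finite_induct) (auto simp: S0 Sadd Sn Se)
  qed
  obtain c where "a = (\<Sum>j<r. nsmul (c j) (e j))" using gen by blast
  hence "a \<in> S" using Ssum[of "{..<r}" c] by simp
  thus "mf e r P w G \<Longrightarrow> mf e r P (Suc w) (Delta a G)" unfolding S_def by blast
qed

lemma mf_foldr:
  assumes gen: "\<And>a. \<exists>c. a = (\<Sum>j<r. nsmul (c j) (e j))" and Pf: "P f"
  shows "mf e r P (length as) (foldr Delta as f)"
proof (induction as)
  case Nil
  have "monoL e (\<lambda>_. 0) [0..<r] f = f" unfolding monoL_def by (induction r) simp_all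
  moreover have "mf e r P 0 (monoL e (\<lambda>_. 0) [0..<r] f)" using Pf by (intro mf_term) auto
  ultimately show ?case by simp
next
  case (Cons a as) thus ?case using mf_Delta[OF gen] by simp
qed

lemma mf_zero_all:
  assumes "mf e r P w G" and "\<And>i h. w \<le> (\<Sum>l<r. i l) \<Longrightarrow> P h \<Longrightarrow> monoL e i [0..<r] h = (\<lambda>_. 0)"
  shows "G = (\<lambda>_. 0)"
  using assms by (induction rule: mf.induct) auto



lemma tfun_ge:
  assumes p: "prime p" and k: "p ^ a + K * ((p - 1) * p ^ (a - 1)) \<le> k"
  shows "K \<le> tfun p a k"
proof -
  have Lp: "(p - 1) * p ^ (a - 1) > 0" using prime_gt_1_nat[OF p] by simp
  have nk: "\<not> k < p ^ a" using k by simp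
  have "K * ((p - 1) * p ^ (a - 1)) \<le> k - p ^ a" using k by simp
  hence "K * ((p - 1) * p ^ (a - 1)) div ((p - 1) * p ^ (a - 1)) \<le> (k - p ^ a) div ((p - 1) * p ^ (a - 1))"
    by (rule div_le_mono)
  hence "K \<le> (k - p ^ a) div ((p - 1) * p ^ (a - 1))" using Lp by simp
  thus ?thesis using nk by (simp add: tfun_def)
qed

lemma part_d:
  assumes p: "prime p" and fin: "finite (UNIV :: 'a::ab_group_add set)"
    and pA: "is_p_group p TYPE('a)" and pB: "is_p_group p TYPE('b::ab_group_add)"
    and ntA: "\<exists>a::'a. a \<noteq> 0"
    and ie: "infinite_exponent TYPE('b)"
  shows "(\<forall>f::'a \<Rightarrow> 'b. fdeg f < \<infinity>) \<and> delta_AB TYPE('a) TYPE('b) = \<infinity>"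
proof
  have pA': "\<And>x::'a. \<exists>k. elem_order x = p ^ k" using pA by (simp add: is_p_group_def)
  have pB': "\<And>y::'b. \<exists>k. elem_order y = p ^ k" using pB by (simp add: is_p_group_def)
  show "\<forall>f::'a \<Rightarrow> 'b. fdeg f < \<infinity>"
  proof
    fix f :: "'a \<Rightarrow> 'b"
    obtain es :: "'a list" where es: "set es = UNIV" "distinct es"
      using finite_distinct_list[OF fin] by blast
    define r where "r = length es"
    define e where "e = (\<lambda>j. es ! j)"
    define al where "al = (\<lambda>j. SOME k. elem_order (e j) = p ^ k)"
    have al: "\<And>j. elem_order (e j) = p ^ al j" unfolding al_def by (rule someI_ex) (rule pA')
    have eo: "\<And>j. nsmul (p ^ al j) (e j) = 0" using al elem_order_kill by metis
    have gen: "\<And>a. \<exists>c. a = (\<Sum>j<r. nsmul (c j) (e j))"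
    proof -
      fix a :: 'a
      have "a \<in> set es" using es(1) by simp
      then obtain j0 where j0: "j0 < r" "e j0 = a" using in_set_conv_nth[of a es] unfolding r_def e_def by blast
      have "(\<Sum>j<r. nsmul (if j = j0 then 1 else 0) (e j)) = (\<Sum>j<r. if j = j0 then e j else 0)"
        by (intro sum.cong) auto
      also have "\<dots> = a" using j0 by simp
      finally show "\<exists>c. a = (\<Sum>j<r. nsmul (c j) (e j))" by (intro exI[of _ "\<lambda>j. if j = j0 then 1 else 0"]) simp
    qed
    define kx where "kx = (\<lambda>x. SOME k. elem_order (f x) = p ^ k)"
    have kx: "\<And>x. elem_order (f x) = p ^ kx x" unfolding kx_def by (rule someI_ex) (rule pB')
    define K where "K = Max (range kx)"
    have fK: "\<And>x. nsmul (p ^ K) (f x) = 0"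
    proof -
      fix x
      have "kx x \<le> K" unfolding K_def using fin by (intro Max_ge) auto
      hence "p ^ K = p ^ (K - kx x) * p ^ kx x" by (simp add: power_add[symmetric])
      thus "nsmul (p ^ K) (f x) = 0" using elem_order_kill[of "f x"] kx[of x] by (simp add: nsmul_mult)
    qed
    define M where "M = (\<Sum>j<r. p ^ al j + K * ((p - 1) * p ^ (al j - 1)))"
    define P :: "('a \<Rightarrow> 'b) \<Rightarrow> bool" where "P = (\<lambda>h. \<forall>x. nsmul (p ^ K) (h x) = 0)"
    have "diffs_vanish (r * M) f"
      unfolding diffs_vanish_def
    proof (intro allI impI)
      fix as :: "'a list" assume las: "length as = Suc (r * M)"
      have "mf e r P (length as) (foldr Delta as f)" using P_def fK by (intro mf_foldr[OF gen]) auto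
      thus "foldr Delta as f = (\<lambda>_. 0)"
      proof (rule mf_zero_all)
        fix i h assume ih: "length as \<le> (\<Sum>l<r. i l)" and Ph: "P h"
        have "\<exists>l<r. M < i l"
        proof (rule ccontr)
          assume "\<not> (\<exists>l<r. M < i l)"
          hence "\<forall>l<r. i l \<le> M" by auto
          hence "(\<Sum>l<r. i l) \<le> (\<Sum>l<r. M)" by (intro sum_mono) auto
          thus False using ih las by simp
        qed
        then obtain l where l: "l < r" "M < i l" by blast
        have "p ^ al l + K * ((p - 1) * p ^ (al l - 1)) \<le> M"
          unfolding M_def using l(1) by (intro member_le_sum) auto
        hence "K \<le> tfun p (al l) (i l)" using l(2) by (intro tfun_ge[OF p]) simp
        also have "\<dots> \<le> (\<Sum>l\<in>{0..<r}. tfun p (al l) (i l))" using l(1) by (intro member_le_sum) auto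
        also have "\<dots> = (\<Sum>l\<leftarrow>[0..<r]. tfun p (al l) (i l))" using sum_set_upt_conv_sum_list_nat[of "\<lambda>l. tfun p (al l) (i l)" 0 r] by simp
        finally have Kle: "K \<le> (\<Sum>l\<leftarrow>[0..<r]. tfun p (al l) (i l))" .
        show "monoL e i [0..<r] h = (\<lambda>_. 0)"
          by (rule kill_zero[OF p _ _ Kle]) (use eo Ph P_def in auto)
      qed
    qed
    thus "fdeg f < \<infinity>" by (rule fdeg_less_inf)
  qed
  show "delta_AB TYPE('a) TYPE('b) = \<infinity>"
  proof (rule delta_AB_inf)
    fix n
    obtain a0 :: 'a where a0: "a0 \<noteq> 0" using ntA by blast
    obtain al where al: "elem_order a0 = p ^ al" using pA' by blast
    have al1: "al \<ge> 1" using al a0 elem_order_one_iff by (cases al) auto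
    have "p ^ n > 0" using prime_gt_0_nat[OF p] by simp
    then obtain b :: 'b where b: "nsmul (p ^ n) b \<noteq> 0" using ie unfolding infinite_exponent_def by blast
    define L where "L = (p - 1) * p ^ (al - 1)"
    define k where "k = p ^ al - 1 + n * L"
    have nz: "(Delta a0 ^^ k) (delta_fun 0 b) a0 \<noteq> 0" unfolding k_def L_def by (rule L1[OF p al1 al pB' b])
    have L1': "L \<ge> 1" unfolding L_def using prime_gt_1_nat[OF p] by simp
    have "p ^ 1 \<le> p ^ al" by (rule power_increasing) (use al1 prime_gt_0_nat[OF p] in auto)
    hence N2: "p ^ al \<ge> 2" using prime_ge_2_nat[OF p] by simp
    have "n \<le> n * L" using L1' by simp
    hence kn: "n \<le> k - 1" unfolding k_def using N2 by linarith
    have "foldr Delta (replicate k a0) (delta_fun 0 b) a0 \<noteq> 0" using nz by (simp only: foldr_replicate_Delta not_False_eq_True)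
    moreover have "length (replicate k a0) = Suc (k - 1)" unfolding k_def using N2 by simp
    ultimately have "\<not> diffs_vanish (k - 1) (delta_fun (0::'a) b)" by (intro not_vanishI)
    hence "\<not> diffs_vanish n (delta_fun (0::'a) b)" using diffs_vanish_mono kn by blast
    thus "\<exists>f::'a \<Rightarrow> 'b. \<not> diffs_vanish n f" by blast
  qed
qed



locale isoloc =
  fixes h :: "'a::ab_group_add \<Rightarrow> (nat \<Rightarrow> int)" and NN :: "nat \<Rightarrow> nat" and r :: nat
  assumes hom: "\<And>x y. h (x + y) = (\<lambda>i\<in>{..<r}. (h x i + h y i) mod int (NN i))"
      and bij: "bij_betw h UNIV (\<Pi>\<^sub>E i\<in>{..<r}. {0..<int (NN i)})"
      and NN2: "\<And>i. i < r \<Longrightarrow> NN i \<ge> 2"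
begin

lemma h_range: "i < r \<Longrightarrow> 0 \<le> h x i \<and> h x i < int (NN i)"
  using bij_betwE[OF bij] by (auto simp: PiE_iff)

lemma h_ext: "i \<ge> r \<Longrightarrow> h x i = undefined"
  using bij_betwE[OF bij] by (auto simp: PiE_iff extensional_def)

lemma h_inj: "h x = h y \<Longrightarrow> x = y"
  using bij_betw_imp_inj_on[OF bij] by (auto simp: inj_on_def)

lemma h_eqI: "(\<And>i. i < r \<Longrightarrow> h x i = h y i) \<Longrightarrow> x = y"
proof -
  assume "\<And>i. i < r \<Longrightarrow> h x i = h y i"
  hence "h x = h y" using h_ext by (metis ext not_le)
  thus "x = y" by (rule h_inj)
qed

lemma h_add: "i < r \<Longrightarrow> h (x + y) i = (h x i + h y i) mod int (NN i)"
  using hom by simp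

lemma h_zero: "i < r \<Longrightarrow> h 0 i = 0"
proof -
  assume i: "i < r"
  have "h 0 i = (h 0 i + h 0 i) mod int (NN i)" using h_add[OF i, of 0 0] by simp
  moreover have "0 \<le> h 0 i" "h 0 i < int (NN i)" using h_range[OF i] by auto
  ultimately have "(h 0 i + h 0 i) mod int (NN i) = h 0 i mod int (NN i)" by simp
  hence "int (NN i) dvd (h 0 i + h 0 i) - h 0 i" by (simp only: mod_eq_dvd_iff)
  hence d: "int (NN i) dvd h 0 i" by simp
  show "h 0 i = 0"
  proof (rule ccontr)
    assume "h 0 i \<noteq> 0"
    hence "0 < h 0 i" using h_range[OF i, of 0] by simp
    hence "int (NN i) \<le> h 0 i" using d by (simp add: zdvd_imp_le)
    thus False using h_range[OF i, of 0] by simp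
  qed
qed

lemma h_nsmul: "i < r \<Longrightarrow> h (nsmul c x) i = (int c * h x i) mod int (NN i)"
proof (induction c)
  case 0 thus ?case using h_zero by simp
next
  case (Suc c)
  have "h (nsmul (Suc c) x) i = (h x i + h (nsmul c x) i) mod int (NN i)"
    by (simp add: nsmul_Suc h_add[OF Suc.prems])
  also have "\<dots> = (h x i + int c * h x i) mod int (NN i)" using Suc by (simp add: mod_add_right_eq)
  finally show ?case by (simp add: algebra_simps)
qed

definition unit :: "nat \<Rightarrow> nat \<Rightarrow> int" where "unit j = (\<lambda>i\<in>{..<r}. if i = j then 1 else 0)"
definition e :: "nat \<Rightarrow> 'a" where "e j = inv_into UNIV h (unit j)"

lemma h_e: "j < r \<Longrightarrow> h (e j) = unit j"
proof -
  assume j: "j < r"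
  have one: "\<And>i. i < r \<Longrightarrow> (1::int) < int (NN i)" using NN2 by force
  have "unit j \<in> (\<Pi>\<^sub>E i\<in>{..<r}. {0..<int (NN i)})"
    unfolding unit_def using one NN2 by (force simp: PiE_iff)
  hence "unit j \<in> h ` UNIV" using bij_betw_imp_surj_on[OF bij] by simp
  thus ?thesis unfolding e_def by (rule f_inv_into_f)
qed

lemma h_e_i: "j < r \<Longrightarrow> i < r \<Longrightarrow> h (e j) i = (if i = j then 1 else 0)"
  using h_e by (simp add: unit_def)

lemma h_sum: "finite J \<Longrightarrow> i < r \<Longrightarrow>
  h (\<Sum>j\<in>J. X j) i = (\<Sum>j\<in>J. h (X j) i) mod int (NN i)"
proof (induction J rule: finite_induct)
  case empty thus ?case using h_zero by simp
next
  case (insert j J)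
  have "h (\<Sum>j\<in>insert j J. X j) i = (h (X j) i + h (\<Sum>j\<in>J. X j) i) mod int (NN i)"
    using insert by (simp add: h_add)
  also have "\<dots> = (h (X j) i + (\<Sum>j\<in>J. h (X j) i)) mod int (NN i)"
    using insert by (simp add: mod_add_right_eq)
  finally show ?case using insert by simp
qed

lemma h_lincomb: "J \<subseteq> {..<r} \<Longrightarrow> i < r \<Longrightarrow>
  h (\<Sum>j\<in>J. nsmul (c j) (e j)) i = (if i \<in> J then int (c i) mod int (NN i) else 0)"
proof -
  assume J: "J \<subseteq> {..<r}" and i: "i < r"
  have fJ: "finite J" using J finite_subset by blast
  have "h (\<Sum>j\<in>J. nsmul (c j) (e j)) i = (\<Sum>j\<in>J. h (nsmul (c j) (e j)) i) mod int (NN i)"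
    by (rule h_sum[OF fJ i])
  also have "(\<Sum>j\<in>J. h (nsmul (c j) (e j)) i) = (\<Sum>j\<in>J. if j = i then int (c i) mod int (NN i) else 0)"
    using J i by (intro sum.cong) (auto simp: h_nsmul h_e_i)
  also have "\<dots> = (if i \<in> J then int (c i) mod int (NN i) else 0)"
    using fJ by (simp add: sum.delta')
  finally show ?thesis by simp
qed

lemma gen: "\<exists>c. a = (\<Sum>j<r. nsmul (c j) (e j))"
proof -
  have "a = (\<Sum>j<r. nsmul (nat (h a j)) (e j))"
  proof (rule h_eqI)
    fix i assume i: "i < r"
    have "h (\<Sum>j<r. nsmul (nat (h a j)) (e j)) i = int (nat (h a i)) mod int (NN i)"
      using h_lincomb[of "{..<r}" i "\<lambda>j. nat (h a j)"] i by simp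
    also have "\<dots> = h a i" using h_range[OF i, of a] by simp
    finally show "h a i = h (\<Sum>j<r. nsmul (nat (h a j)) (e j)) i" by simp
  qed
  thus ?thesis by (rule exI[of _ "\<lambda>j. nat (h a j)"])
qed

lemma e_kill: "j < r \<Longrightarrow> nsmul c (e j) = 0 \<longleftrightarrow> NN j dvd c"
proof -
  assume j: "j < r"
  have "nsmul c (e j) = 0 \<longleftrightarrow> (\<forall>i<r. h (nsmul c (e j)) i = h 0 i)"
    using h_eqI by auto
  also have "\<dots> \<longleftrightarrow> int c mod int (NN j) = 0"
    using j by (auto simp: h_nsmul h_e_i h_zero)
  also have "int c mod int (NN j) = int (c mod NN j)" by (rule of_nat_mod[symmetric])
  also have "(int (c mod NN j) = 0) \<longleftrightarrow> NN j dvd c" by (simp add: dvd_eq_mod_eq_0)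
  finally show ?thesis .
qed

lemma e_order: "j < r \<Longrightarrow> elem_order (e j) = NN j"
proof -
  assume j: "j < r"
  show ?thesis
  proof (rule elem_order_eqI)
    show "NN j > 0" using NN2[OF j] by simp
    show "nsmul (NN j) (e j) = 0" using e_kill[OF j] by simp
    fix m assume "0 < m" "m < NN j"
    thus "nsmul m (e j) \<noteq> 0" using e_kill[OF j] by (simp add: nat_dvd_not_less)
  qed
qed

end

lemma iso_to_isoloc:
  assumes iso: "(add_grp :: 'a::ab_group_add monoid) \<cong> product_group {..<r} (\<lambda>i. integer_mod_group (NN i))"
    and NN2: "\<And>i. i < r \<Longrightarrow> NN i \<ge> 2"
  shows "\<exists>h. isoloc (h :: 'a \<Rightarrow> nat \<Rightarrow> int) NN r"
proof -
  obtain h where h: "h \<in> iso (add_grp :: 'a monoid) (product_group {..<r} (\<lambda>i. integer_mod_group (NN i)))"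
    using iso unfolding is_iso_def by blast
  have NN0: "\<And>i. i < r \<Longrightarrow> NN i \<noteq> 0" using NN2 by (metis not_numeral_le_zero le_zero_eq)
  have car: "carrier (product_group {..<r} (\<lambda>i. integer_mod_group (NN i))) = (\<Pi>\<^sub>E i\<in>{..<r}. {0..<int (NN i)})"
    unfolding carrier_product_group by (rule PiE_cong) (use NN0 in \<open>simp add: carrier_integer_mod_group\<close>)
  have bij: "bij_betw h UNIV (\<Pi>\<^sub>E i\<in>{..<r}. {0..<int (NN i)})"
    using h car unfolding iso_def by (simp add: add_grp_def)
  have hom: "\<And>x y. h (x + y) = (\<lambda>i\<in>{..<r}. (h x i + h y i) mod int (NN i))"
  proof -
    fix x y :: 'a
    have "h (x \<otimes>\<^bsub>(add_grp :: 'a monoid)\<^esub> y) = h x \<otimes>\<^bsub>product_group {..<r} (\<lambda>i. integer_mod_group (NN i))\<^esub> h y"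
      using h unfolding iso_def hom_def by (simp add: add_grp_def)
    moreover have "x \<otimes>\<^bsub>(add_grp :: 'a monoid)\<^esub> y = x + y" by (simp add: add_grp_def)
    ultimately show "h (x + y) = (\<lambda>i\<in>{..<r}. (h x i + h y i) mod int (NN i))"
      using NN0 by (auto simp: product_group_def integer_mod_group_def)
  qed
  show ?thesis using hom bij NN2 by (intro exI[of _ h]) (unfold_locales)
qed



context isoloc
begin

lemma h_add_nsmul_e: "j < r \<Longrightarrow> l < r \<Longrightarrow> h (x + nsmul c (e l)) j = (h x j + (if j = l then int c else 0)) mod int (NN j)"
  by (simp add: h_add h_nsmul h_e_i mod_add_right_eq)

lemma h_add_other: "j < r \<Longrightarrow> l < r \<Longrightarrow> j \<noteq> l \<Longrightarrow> h (x + nsmul c (e l)) j = h x j"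
  using h_add_nsmul_e[of j l x c] h_range[of j x] by simp

lemma h_add_sumlist_other:
  "set ls \<subseteq> {..<r} \<Longrightarrow> j < r \<Longrightarrow> j \<notin> set ls \<Longrightarrow>
   h (y + (\<Sum>l\<leftarrow>ls. nsmul (c l) (e l))) j = h y j"
proof (induction ls arbitrary: y)
  case Nil thus ?case by simp
next
  case (Cons l ls)
  have eq: "y + (\<Sum>l\<leftarrow>l # ls. nsmul (c l) (e l)) = (y + nsmul (c l) (e l)) + (\<Sum>l\<leftarrow>ls. nsmul (c l) (e l))"
    by (simp add: add.assoc)
  have "h (y + (\<Sum>l\<leftarrow>l # ls. nsmul (c l) (e l))) j = h (y + nsmul (c l) (e l)) j"
    unfolding eq by (rule Cons.IH) (use Cons.prems in auto)
  also have "\<dots> = h y j" using Cons by (intro h_add_other) auto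
  finally show ?case .
qed

definition Zs where "Zs = {x. \<forall>j. 1 \<le> j \<and> j < r \<longrightarrow> h x j = 0}"

lemma supp_Delta0:
  assumes r: "r \<ge> 1" and g: "\<And>x. x \<notin> Zs \<Longrightarrow> g x = 0"
  shows "x \<notin> Zs \<Longrightarrow> (Delta (e 0) ^^ k) g x = 0"
proof (induction k arbitrary: x)
  case 0 thus ?case using g by simp
next
  case (Suc k)
  have "x + e 0 \<notin> Zs"
  proof
    assume "x + e 0 \<in> Zs"
    moreover obtain j where j: "1 \<le> j" "j < r" "h x j \<noteq> 0" using Suc.prems unfolding Zs_def by blast
    moreover have "h (x + nsmul 1 (e 0)) j = h x j" using j r by (intro h_add_other) auto
    ultimately show False unfolding Zs_def by simp
  qed
  thus ?case using Suc by (simp add: Delta_apply)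
qed

lemma psi_claim:
  assumes phi: "\<And>x. x \<notin> Zs \<Longrightarrow> phi x = 0"
  shows "distinct ls \<Longrightarrow> set ls \<subseteq> {1..<r} \<Longrightarrow> (\<forall>j\<in>set ls. h x j = 1) \<Longrightarrow>
    foldr Delta (concat (map (\<lambda>j. replicate (NN j - 1) (e j)) ls)) phi x =
    phi (x + (\<Sum>j\<leftarrow>ls. nsmul (NN j - 1) (e j)))"
proof (induction ls arbitrary: x)
  case Nil thus ?case by simp
next
  case (Cons j ls)
  define psi where "psi = foldr Delta (concat (map (\<lambda>j. replicate (NN j - 1) (e j)) ls)) phi"
  have jr: "1 \<le> j" "j < r" using Cons.prems(2) by auto
  have jls: "j \<notin> set ls" using Cons.prems(1) by simp
  have lsr: "set ls \<subseteq> {..<r}" using Cons.prems(2) by auto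
  have IH: "\<And>y. (\<forall>l\<in>set ls. h y l = 1) \<Longrightarrow> psi y = phi (y + (\<Sum>l\<leftarrow>ls. nsmul (NN l - 1) (e l)))"
    unfolding psi_def using Cons by auto
  have keep: "\<And>c. \<forall>l\<in>set ls. h (x + nsmul c (e j)) l = 1"
  proof
    fix c l assume l: "l \<in> set ls"
    hence "l < r" "l \<noteq> j" using Cons.prems(2) jls by auto
    hence "h (x + nsmul c (e j)) l = h x l" using jr by (intro h_add_other) auto
    thus "h (x + nsmul c (e j)) l = 1" using Cons.prems(3) l by simp
  qed
  have "foldr Delta (concat (map (\<lambda>j. replicate (NN j - 1) (e j)) (j # ls))) phi x =
        foldr Delta (replicate (NN j - 1) (e j)) psi x" unfolding psi_def by simp
  also have "\<dots> = psi (x + sum_list (replicate (NN j - 1) (e j)))"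
  proof (rule Z1, intro ballI impI)
    fix ys assume ys: "ys \<in> set (subseqs (replicate (NN j - 1) (e j)))" "ys \<noteq> replicate (NN j - 1) (e j)"
    obtain c where c: "c \<le> NN j - 1" "ys = replicate c (e j)" using subseqs_replicate[OF ys(1)] by blast
    have cl: "c < NN j - 1" using c ys(2) by (cases "c = NN j - 1") auto
    have "psi (x + sum_list ys) = phi (x + nsmul c (e j) + (\<Sum>l\<leftarrow>ls. nsmul (NN l - 1) (e l)))"
      using IH[OF keep[of c]] c by (simp add: sum_list_replicate_nsmul)
    also have "\<dots> = 0"
    proof (rule phi)
      have "h (x + nsmul c (e j) + (\<Sum>l\<leftarrow>ls. nsmul (NN l - 1) (e l))) j = h (x + nsmul c (e j)) j"
        using lsr jr jls by (intro h_add_sumlist_other) auto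
      also have "\<dots> = (1 + int c) mod int (NN j)" using h_add_nsmul_e[of j j x c] jr Cons.prems(3) by simp
      also have "\<dots> = 1 + int c" using cl by simp
      finally show "x + nsmul c (e j) + (\<Sum>l\<leftarrow>ls. nsmul (NN l - 1) (e l)) \<notin> Zs"
        unfolding Zs_def using jr by force
    qed
    finally show "psi (x + sum_list ys) = 0" .
  qed
  also have "\<dots> = phi (x + nsmul (NN j - 1) (e j) + (\<Sum>l\<leftarrow>ls. nsmul (NN l - 1) (e l)))"
    using IH[OF keep[of "NN j - 1"]] by (simp add: sum_list_replicate_nsmul)
  also have "\<dots> = phi (x + (\<Sum>l\<leftarrow>j # ls. nsmul (NN l - 1) (e l)))" by (simp add: add.assoc)
  finally show ?case .
qed

lemma x0_coord: "i < r \<Longrightarrow> h (\<Sum>j<r. e j) i = 1"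
  using h_lincomb[of "{..<r}" i "\<lambda>_. 1"] NN2[of i] by simp

lemma x0_shift:
  assumes r: "r \<ge> 1"
  shows "(\<Sum>j<r. e j) + (\<Sum>j\<leftarrow>[1..<r]. nsmul (NN j - 1) (e j)) = e 0"
proof (rule h_eqI)
  fix i assume i: "i < r"
  have S: "(\<Sum>j\<leftarrow>[1..<r]. nsmul (NN j - 1) (e j)) = (\<Sum>j\<in>{1..<r}. nsmul (NN j - 1) (e j))"
    by (simp add: sum_list_distinct_conv_sum_set)
  have hS: "h (\<Sum>j\<in>{1..<r}. nsmul (NN j - 1) (e j)) i = (if i \<in> {1..<r} then int (NN i - 1) mod int (NN i) else 0)"
    using i by (intro h_lincomb) auto
  have "h ((\<Sum>j<r. e j) + (\<Sum>j\<leftarrow>[1..<r]. nsmul (NN j - 1) (e j))) i =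
        (h (\<Sum>j<r. e j) i + h (\<Sum>j\<in>{1..<r}. nsmul (NN j - 1) (e j)) i) mod int (NN i)"
    unfolding S by (rule h_add[OF i])
  also have "\<dots> = (1 + (if i \<in> {1..<r} then int (NN i - 1) mod int (NN i) else 0)) mod int (NN i)"
    by (simp only: x0_coord[OF i] hS)
  also have "\<dots> = (if i = 0 then 1 else 0)"
  proof (cases "i = 0")
    case True thus ?thesis using NN2[OF i] by simp
  next
    case False
    have n1: "int (NN i - 1) = int (NN i) - 1" using NN2[OF i] by simp
    have "(1 + int (NN i - 1) mod int (NN i)) mod int (NN i) = (1 + int (NN i - 1)) mod int (NN i)"
      by (simp add: mod_add_right_eq)
    also have "\<dots> = 0" using n1 by simp
    finally show ?thesis using False i by simp
  qed
  also have "\<dots> = h (e 0) i" using h_e_i[OF _ i, of 0] r by simp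
  finally show "h ((\<Sum>j<r. e j) + (\<Sum>j\<leftarrow>[1..<r]. nsmul (NN j - 1) (e j))) i = h (e 0) i" .
qed

end



lemma tfun_bound:
  assumes p: "prime p" and al: "al \<le> a0" and L0: "L0 = (p - 1) * p ^ (a0 - 1)"
  shows "k + 1 \<le> tfun p al k * L0 + p ^ al"
proof (cases "k < p ^ al")
  case True thus ?thesis by (simp add: tfun_def)
next
  case False
  define Ll where "Ll = (p - 1) * p ^ (al - 1)"
  have Llp: "Ll > 0" unfolding Ll_def using prime_gt_1_nat[OF p] by simp
  have LL: "Ll \<le> L0" unfolding Ll_def L0 using al prime_gt_0_nat[OF p]
    by (intro mult_left_mono power_increasing) auto
  define q where "q = (k - p ^ al) div Ll"
  have "k - p ^ al = q * Ll + (k - p ^ al) mod Ll" unfolding q_def by simp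
  moreover have "(k - p ^ al) mod Ll < Ll" using Llp by simp
  ultimately have "k - p ^ al + 1 \<le> Suc q * Ll" by simp
  also have "\<dots> \<le> Suc q * L0" using LL by (rule mult_le_mono2)
  finally have "k - p ^ al + 1 \<le> Suc q * L0" .
  moreover have "tfun p al k = Suc q" using False unfolding tfun_def q_def Ll_def by simp
  ultimately show ?thesis using False by simp
qed

lemma arith_c:
  fixes r :: nat
  assumes p: "prime p"
    and al: "\<And>l. l < r \<Longrightarrow> al l \<le> al 0"
    and sum: "Suc ((\<Sum>l<r. (p ^ al l - 1)) + (\<beta> - 1) * ((p - 1) * p ^ (al 0 - 1))) \<le> (\<Sum>l<r. i l)"
  shows "\<beta> \<le> (\<Sum>l<r. tfun p (al l) (i l))"
proof -
  define L0 where "L0 = (p - 1) * p ^ (al 0 - 1)"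
  have L0p: "L0 > 0" unfolding L0_def using prime_gt_1_nat[OF p] by simp
  define T where "T = (\<Sum>l<r. tfun p (al l) (i l))"
  have per: "\<And>l. l < r \<Longrightarrow> i l + 1 \<le> tfun p (al l) (i l) * L0 + p ^ al l"
    using tfun_bound[OF p al L0_def] by blast
  have "(\<Sum>l<r. i l + 1) \<le> (\<Sum>l<r. tfun p (al l) (i l) * L0 + p ^ al l)"
    using per by (intro sum_mono) auto
  moreover have e1: "(\<Sum>l<r. i l + 1) = (\<Sum>l<r. i l) + r" by (induction r) auto
  moreover have e2: "(\<Sum>l<r. tfun p (al l) (i l) * L0 + p ^ al l) = T * L0 + (\<Sum>l<r. p ^ al l)"
    by (simp add: sum.distrib sum_distrib_right T_def)
  ultimately have s1: "(\<Sum>l<r. i l) + r \<le> T * L0 + (\<Sum>l<r. p ^ al l)" by simp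
  have "(\<Sum>l<r. (p ^ al l - 1)) + r = (\<Sum>l<r. (p ^ al l - 1) + 1)" by (induction r) auto
  also have "\<dots> = (\<Sum>l<r. p ^ al l)" using prime_gt_0_nat[OF p] by (intro sum.cong) auto
  finally have s2: "(\<Sum>l<r. (p ^ al l - 1)) + r = (\<Sum>l<r. p ^ al l)" .
  have "(\<beta> - 1) * L0 + 1 \<le> T * L0" using s1 s2 sum unfolding L0_def by linarith
  hence "(\<beta> - 1) * L0 < T * L0" by linarith
  hence "\<beta> - 1 < T" using mult_less_cancel2 by blast
  thus ?thesis unfolding T_def by simp
qed



lemma part_c:
  fixes \<alpha> :: "nat list" and \<beta> p :: nat
  assumes p: "prime p"
    and iso: "(add_grp :: 'a::ab_group_add monoid) \<cong> product_group {..<length \<alpha>} (\<lambda>i. integer_mod_group (p ^ (\<alpha> ! i)))"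
    and sorted: "sorted_wrt (\<ge>) \<alpha>" and al1: "\<forall>i<length \<alpha>. 1 \<le> \<alpha> ! i"
    and pB: "is_p_group p TYPE('b::ab_group_add)" and ex: "has_exponent TYPE('b) (p ^ \<beta>)"
    and ntA: "\<exists>a::'a. a \<noteq> 0" and ntB: "\<exists>b::'b. b \<noteq> 0"
  shows "delta_AB TYPE('a) TYPE('b) =
             ereal (real ((\<Sum>j<length \<alpha>. (p ^ (\<alpha> ! j) - 1))
                          + (\<beta> - 1) * (p - 1) * p ^ (\<alpha> ! 0 - 1)))"
proof -
  define r where "r = length \<alpha>"
  define NN where "NN = (\<lambda>i. p ^ (\<alpha> ! i))"
  have pB': "\<And>y::'b. \<exists>k. elem_order y = p ^ k" using pB by (simp add: is_p_group_def)
  have NN2: "\<And>i. i < r \<Longrightarrow> NN i \<ge> 2"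
  proof -
    fix i assume i: "i < r"
    have "p ^ 1 \<le> p ^ (\<alpha> ! i)" using al1 i prime_gt_0_nat[OF p] unfolding r_def
      by (intro power_increasing) auto
    thus "NN i \<ge> 2" unfolding NN_def using prime_ge_2_nat[OF p] by simp
  qed
  have iso': "(add_grp :: 'a monoid) \<cong> product_group {..<r} (\<lambda>i. integer_mod_group (NN i))"
    using iso unfolding r_def NN_def .
  obtain h :: "'a \<Rightarrow> nat \<Rightarrow> int" where "isoloc h NN r" using iso_to_isoloc[OF iso' NN2] by blast
  then interpret isoloc h NN r .
  have r1: "r \<ge> 1"
  proof (rule ccontr)
    assume "\<not> r \<ge> 1" hence r0: "r = 0" by simp
    obtain a0 :: 'a where a0: "a0 \<noteq> 0" using ntA by blast
    have "a0 = 0" by (rule h_eqI) (use r0 in simp)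
    thus False using a0 by simp
  qed
  have hexp: "\<And>x::'b. nsmul (p ^ \<beta>) x = 0" using ex by (simp add: has_exponent_def)
  have hmin: "\<And>m. m > 0 \<Longrightarrow> (\<forall>x::'b. nsmul m x = 0) \<Longrightarrow> p ^ \<beta> \<le> m" using ex by (simp add: has_exponent_def)
  have b1: "\<beta> \<ge> 1"
  proof (rule ccontr)
    assume "\<not> \<beta> \<ge> 1" hence "\<beta> = 0" by simp
    hence "\<And>x::'b. x = 0" using hexp by (metis nsmul_1 power_0)
    thus False using ntB by blast
  qed
  obtain b :: 'b where b: "nsmul (p ^ (\<beta> - 1)) b \<noteq> 0"
  proof (rule ccontr)
    assume "\<not> thesis"
    hence all: "\<forall>x::'b. nsmul (p ^ (\<beta> - 1)) x = 0" using that by blast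
    have "p ^ \<beta> \<le> p ^ (\<beta> - 1)" using hmin[OF _ all] prime_gt_0_nat[OF p] by simp
    moreover have "p ^ (\<beta> - 1) < p ^ \<beta>" using b1 prime_gt_1_nat[OF p] by (intro power_strict_increasing) auto
    ultimately show False by simp
  qed
  define L0 where "L0 = (p - 1) * p ^ (\<alpha> ! 0 - 1)"
  define D where "D = (\<Sum>j<r. (NN j - 1)) + (\<beta> - 1) * L0"
  have ord_e: "\<And>l. l < r \<Longrightarrow> nsmul (p ^ (\<alpha> ! l)) (e l) = 0" using e_kill unfolding NN_def by simp
  have al_le: "\<And>l. l < r \<Longrightarrow> \<alpha> ! l \<le> \<alpha> ! 0"
  proof -
    fix l assume l: "l < r"
    show "\<alpha> ! l \<le> \<alpha> ! 0"
    proof (cases "l = 0")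
      case False
      thus ?thesis using sorted_wrt_nth_less[OF sorted, of 0 l] l unfolding r_def by simp
    qed simp
  qed
  have up: "\<And>f::'a \<Rightarrow> 'b. diffs_vanish D f"
    unfolding diffs_vanish_def
  proof (intro allI impI)
    fix f :: "'a \<Rightarrow> 'b" and as :: "'a list" assume las: "length as = Suc D"
    have "mf e r (\<lambda>_. True) (length as) (foldr Delta as f)" by (intro mf_foldr[OF gen]) simp
    thus "foldr Delta as f = (\<lambda>_. 0)"
    proof (rule mf_zero_all)
      fix i and g :: "'a \<Rightarrow> 'b" assume ih: "length as \<le> (\<Sum>l<r. i l)"
      have "\<beta> \<le> (\<Sum>l<r. tfun p (\<alpha> ! l) (i l))"
      proof (rule arith_c[OF p])
        show "\<And>l. l < r \<Longrightarrow> \<alpha> ! l \<le> \<alpha> ! 0" by (rule al_le)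
        show "Suc ((\<Sum>l<r. p ^ (\<alpha> ! l) - 1) + (\<beta> - 1) * ((p - 1) * p ^ (\<alpha> ! 0 - 1))) \<le> (\<Sum>l<r. i l)"
          using ih las unfolding D_def NN_def L0_def by simp
      qed
      also have "\<dots> = (\<Sum>l\<leftarrow>[0..<r]. tfun p (\<alpha> ! l) (i l))"
        using sum_set_upt_conv_sum_list_nat[of "\<lambda>l. tfun p (\<alpha> ! l) (i l)" 0 r] by (simp add: atLeast0LessThan)
      finally have Kle: "\<beta> \<le> (\<Sum>l\<leftarrow>[0..<r]. tfun p (\<alpha> ! l) (i l))" .
      show "monoL e i [0..<r] g = (\<lambda>_. 0)"
        by (rule kill_zero[OF p _ _ Kle]) (use ord_e hexp in auto)
    qed
  qed
  define k0 where "k0 = p ^ (\<alpha> ! 0) - 1 + (\<beta> - 1) * L0"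
  define phi where "phi = (Delta (e 0) ^^ k0) (delta_fun 0 b)"
  have a01: "\<alpha> ! 0 \<ge> 1" using al1 r1 unfolding r_def by (metis less_le_trans zero_less_one)
  have ord0: "elem_order (e 0) = p ^ (\<alpha> ! 0)" using e_order[of 0] r1 unfolding NN_def by simp
  have phi_e0: "phi (e 0) \<noteq> 0"
    unfolding phi_def k0_def L0_def by (rule L1[OF p a01 ord0 pB' b])
  have z: "0 \<in> Zs" unfolding Zs_def using h_zero by auto
  have phi_supp: "\<And>x. x \<notin> Zs \<Longrightarrow> phi x = 0"
    unfolding phi_def using z by (intro supp_Delta0[OF r1]) (auto simp: delta_fun_def)
  define rest where "rest = concat (map (\<lambda>j. replicate (NN j - 1) (e j)) [1..<r])"
  define lst where "lst = replicate k0 (e 0) @ rest"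
  have "foldr Delta lst (delta_fun 0 b) = foldr Delta (replicate k0 (e 0)) (foldr Delta rest (delta_fun 0 b))"
    unfolding lst_def by simp
  also have "\<dots> = foldr Delta rest (foldr Delta (replicate k0 (e 0)) (delta_fun 0 b))"
    by (rule foldr_Delta_comm2)
  also have "\<dots> = foldr Delta rest phi" unfolding phi_def by (simp only: foldr_replicate_Delta)
  finally have fl: "foldr Delta lst (delta_fun 0 b) = foldr Delta rest phi" .
  have "foldr Delta rest phi (\<Sum>j<r. e j) = phi ((\<Sum>j<r. e j) + (\<Sum>j\<leftarrow>[1..<r]. nsmul (NN j - 1) (e j)))"
    unfolding rest_def by (rule psi_claim[OF phi_supp]) (auto simp: x0_coord)
  also have "\<dots> = phi (e 0)" by (simp only: x0_shift[OF r1])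
  finally have nz: "foldr Delta lst (delta_fun 0 b) (\<Sum>j<r. e j) \<noteq> 0" using fl phi_e0 by simp
  have N01: "NN 0 - 1 \<ge> 1" using NN2[of 0] r1 by simp
  have "length rest = (\<Sum>j\<leftarrow>[1..<r]. NN j - 1)" unfolding rest_def by (simp add: length_concat comp_def)
  also have "\<dots> = (\<Sum>j\<in>{1..<r}. NN j - 1)" by (simp add: sum_list_distinct_conv_sum_set)
  finally have lr: "length rest = (\<Sum>j\<in>{1..<r}. NN j - 1)" .
  have "(\<Sum>j<r. (NN j - 1)) = (NN 0 - 1) + (\<Sum>j\<in>{1..<r}. NN j - 1)"
  proof -
    have "{..<r} = insert 0 {1..<r}" using r1 by auto
    thus ?thesis by simp
  qed
  hence lD: "length lst = D" unfolding lst_def D_def k0_def using lr NN_def by simp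
  have "NN 0 - 1 \<le> (\<Sum>j<r. NN j - 1)" using r1 by (intro member_le_sum) auto
  hence D1: "D = Suc (D - 1)" unfolding D_def using N01 by linarith
  have nv: "\<not> diffs_vanish (D - 1) (delta_fun (0::'a) b)"
    by (rule not_vanishI[of lst]) (use lD D1 nz in auto)
  have "delta_AB TYPE('a) TYPE('b) = ereal (real D)" by (rule delta_AB_eq[OF up nv D1])
  moreover have "D = (\<Sum>j<length \<alpha>. (p ^ (\<alpha> ! j) - 1)) + (\<beta> - 1) * (p - 1) * p ^ (\<alpha> ! 0 - 1)"
    unfolding D_def r_def NN_def L0_def by (simp add: mult.assoc)
  ultimately show ?thesis by simp
qed


theorem theorem3p8:
  assumes ntA: "\<exists>a::'a::ab_group_add. a \<noteq> 0"
      and ntB: "\<exists>b::'b::ab_group_add. b \<noteq> 0"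
  shows
   "(infinite (UNIV :: 'a set) \<longrightarrow>
       (\<forall>b::'b. b \<noteq> 0 \<longrightarrow> fdeg (delta_fun (0::'a) b) = \<infinity>) \<and>
       delta_AB TYPE('a) TYPE('b) = \<infinity>)
  \<and> ((\<not> (\<exists>p::nat. prime p \<and> finite (UNIV :: 'a set) \<and>
            is_p_group p TYPE('a) \<and> is_p_group p TYPE('b))) \<longrightarrow>
       (\<exists>b::'b. fdeg (delta_fun (0::'a) b) = \<infinity>) \<and>
       delta_AB TYPE('a) TYPE('b) = \<infinity>)
  \<and> (\<forall>(p::nat) (\<alpha>::nat list) (\<beta>::nat).
       prime p \<and> finite (UNIV :: 'a set) \<and> is_p_group p TYPE('a) \<and>
       (add_grp :: 'a monoid) \<cong>
          product_group {..<length \<alpha>} (\<lambda>i. integer_mod_group (p ^ (\<alpha> ! i))) \<and>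
       sorted_wrt (\<ge>) \<alpha> \<and> (\<forall>i<length \<alpha>. 1 \<le> \<alpha> ! i) \<and>
       is_p_group p TYPE('b) \<and> has_exponent TYPE('b) (p ^ \<beta>)
       \<longrightarrow> delta_AB TYPE('a) TYPE('b) =
             ereal (real ((\<Sum>j<length \<alpha>. (p ^ (\<alpha> ! j) - 1))
                          + (\<beta> - 1) * (p - 1) * p ^ (\<alpha> ! 0 - 1))))
  \<and> (\<forall>p::nat.
       prime p \<and> finite (UNIV :: 'a set) \<and> is_p_group p TYPE('a) \<and>
       is_p_group p TYPE('b) \<and> infinite_exponent TYPE('b)
       \<longrightarrow> (\<forall>f::'a \<Rightarrow> 'b. fdeg f < \<infinity>) \<and> delta_AB TYPE('a) TYPE('b) = \<infinity>)"
proof -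
  have c1: "infinite (UNIV :: 'a set) \<longrightarrow>
       (\<forall>b::'b. b \<noteq> 0 \<longrightarrow> fdeg (delta_fun (0::'a) b) = \<infinity>) \<and>
       delta_AB TYPE('a) TYPE('b) = \<infinity>"
  proof
    assume inf: "infinite (UNIV :: 'a set)"
    have A: "\<forall>b::'b. b \<noteq> 0 \<longrightarrow> fdeg (delta_fun (0::'a) b) = \<infinity>"
      using part_a[OF inf] by blast
    obtain b :: 'b where "b \<noteq> 0" using ntB by blast
    hence "fdeg (delta_fun (0::'a) b) = \<infinity>" using part_a[OF inf] by blast
    hence "delta_AB TYPE('a) TYPE('b) = \<infinity>" by (rule delta_AB_inf2)
    thus "(\<forall>b::'b. b \<noteq> 0 \<longrightarrow> fdeg (delta_fun (0::'a) b) = \<infinity>) \<and>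
       delta_AB TYPE('a) TYPE('b) = \<infinity>" using A by blast
  qed
  have c2: "(\<not> (\<exists>p::nat. prime p \<and> finite (UNIV :: 'a set) \<and>
            is_p_group p TYPE('a) \<and> is_p_group p TYPE('b))) \<longrightarrow>
       (\<exists>b::'b. fdeg (delta_fun (0::'a) b) = \<infinity>) \<and>
       delta_AB TYPE('a) TYPE('b) = \<infinity>"
  proof
    assume nop: "\<not> (\<exists>p::nat. prime p \<and> finite (UNIV :: 'a set) \<and>
            is_p_group p TYPE('a) \<and> is_p_group p TYPE('b))"
    have B: "\<exists>b::'b. fdeg (delta_fun (0::'a) b) = \<infinity>" by (rule part_b[OF ntA ntB nop])
    then obtain b :: 'b where "fdeg (delta_fun (0::'a) b) = \<infinity>" by blast
    hence "delta_AB TYPE('a) TYPE('b) = \<infinity>" by (rule delta_AB_inf2)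
    thus "(\<exists>b::'b. fdeg (delta_fun (0::'a) b) = \<infinity>) \<and> delta_AB TYPE('a) TYPE('b) = \<infinity>"
      using B by blast
  qed
  have c3: "\<forall>(p::nat) (\<alpha>::nat list) (\<beta>::nat).
       prime p \<and> finite (UNIV :: 'a set) \<and> is_p_group p TYPE('a) \<and>
       (add_grp :: 'a monoid) \<cong>
          product_group {..<length \<alpha>} (\<lambda>i. integer_mod_group (p ^ (\<alpha> ! i))) \<and>
       sorted_wrt (\<ge>) \<alpha> \<and> (\<forall>i<length \<alpha>. 1 \<le> \<alpha> ! i) \<and>
       is_p_group p TYPE('b) \<and> has_exponent TYPE('b) (p ^ \<beta>)
       \<longrightarrow> delta_AB TYPE('a) TYPE('b) =
             ereal (real ((\<Sum>j<length \<alpha>. (p ^ (\<alpha> ! j) - 1))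
                          + (\<beta> - 1) * (p - 1) * p ^ (\<alpha> ! 0 - 1)))"
  proof (intro allI impI)
    fix p :: nat and \<alpha> :: "nat list" and \<beta> :: nat
    assume h: "prime p \<and> finite (UNIV :: 'a set) \<and> is_p_group p TYPE('a) \<and>
       (add_grp :: 'a monoid) \<cong>
          product_group {..<length \<alpha>} (\<lambda>i. integer_mod_group (p ^ (\<alpha> ! i))) \<and>
       sorted_wrt (\<ge>) \<alpha> \<and> (\<forall>i<length \<alpha>. 1 \<le> \<alpha> ! i) \<and>
       is_p_group p TYPE('b) \<and> has_exponent TYPE('b) (p ^ \<beta>)"
    show "delta_AB TYPE('a) TYPE('b) =
             ereal (real ((\<Sum>j<length \<alpha>. (p ^ (\<alpha> ! j) - 1))
                          + (\<beta> - 1) * (p - 1) * p ^ (\<alpha> ! 0 - 1)))"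
      using h by (intro part_c[OF _ _ _ _ _ _ ntA ntB]) auto
  qed
  have c4: "\<forall>p::nat.
       prime p \<and> finite (UNIV :: 'a set) \<and> is_p_group p TYPE('a) \<and>
       is_p_group p TYPE('b) \<and> infinite_exponent TYPE('b)
       \<longrightarrow> (\<forall>f::'a \<Rightarrow> 'b. fdeg f < \<infinity>) \<and> delta_AB TYPE('a) TYPE('b) = \<infinity>"
  proof (intro allI impI)
    fix p :: nat
    assume h: "prime p \<and> finite (UNIV :: 'a set) \<and> is_p_group p TYPE('a) \<and>
       is_p_group p TYPE('b) \<and> infinite_exponent TYPE('b)"
    show "(\<forall>f::'a \<Rightarrow> 'b. fdeg f < \<infinity>) \<and> delta_AB TYPE('a) TYPE('b) = \<infinity>"
      using h by (intro part_d[OF _ _ _ _ ntA]) auto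
  qed
  show ?thesis using c1 c2 c3 c4 by blast
qed

end
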